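(* Let $\tau>0$ and let $E,A,B\in\mathbb{C}^{n,n}$ be pairwise commuting with $(E,A,B)$ regular (i.e. $\det(\lambda E-A-\omega B)\not\equiv0$), and suppose the DDAE $E\dot x(t)=Ax(t)+Bx(t-\tau)+f(t)$, $t\ge0$, $x|_{[-\tau,0]}=\varphi$, is already in the form $E=\mathrm{diag}(J^E,N^E_2,N^E_3)$, $A=\mathrm{diag}(A_1,J^A,N^A_3)$, $B=\mathrm{diag}(B_1,B_2,J^B)$ with $J^E,J^A,J^B$ nonsingular and $N^E_2,N^E_3,N^A_3$ nilpotent, where $x=(x_1,x_2,x_3)$, $f=(f_1,f_2,f_3)$, $\varphi=(\varphi_1,\varphi_2,\varphi_3)$ are partitioned conformably and $n_3$ is the size of the third block. Assume the corresponding IVP is uniquely solvable and that $\varphi$ and $f$ are sufficiently smooth. Set $\tilde A_1=(J^E)^{-1}A_1$, $\tilde B_1=(J^E)^{-1}B_1$, $\tilde f_1=(J^E)^{-1}f_1$, $\hat B_1=e^{-\tilde A_1\tau}\tilde B_1$, $\tilde N^E_2=(J^A)^{-1}N^E_2$, $\tilde B_2=(J^A)^{-1}B_2$, $\tilde f_2=(J^A)^{-1}f_2$, $\tilde N^E_3=(J^B)^{-1}N^E_3$, $\tilde N^A_3=(J^B)^{-1}N^A_3$, $\tilde f_3=(J^B)^{-1}f_3$, and let $\zeta$ be the nilpotency index of $\tilde N^E_2$. Then the solution satisfies, for all $t\ge0$, $$x_1(t)=e^{\tilde A_1t}e_\tau^{\hat B_1(t-\tau)}\varphi_1(0)+\int_{-\tau}^0e^{\tilde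 A_1(t-s)}e_\tau^{\hat B_1(t-2\tau-s)}\hat B_1\varphi_1(s)\,ds+\int_0^te^{\tilde A_1(t-s)}e_\tau^{\hat B_1(t-\tau-s)}\tilde f_1(s)\,ds,$$ $$x_2(t)=-\sum_{i=0}^{\zeta-1}(\tilde N^E_2)^i\Big(\tilde B_2x_2^{(i)}(t-\tau)+\tilde f_2^{(i)}(t)\Big),\qquad x_3(t)=-\sum_{i=0}^{n_3-1}\Big(\tilde N^E_3\tfrac{d}{dt}-\tilde N^A_3\Big)^i\tilde f_3\big(t+(i+1)\tau\big).$$
   Context: For a square matrix $D$, the delay matrix exponential is $e^{Dt}_\tau=0$ for $t<-\tau$, $e^{Dt}_\tau=I$ for $-\tau\le t\le0$, and $e^{Dt}_\tau=I+Dt+\frac{D^2}{2!}(t-\tau)^2+\dots+\frac{D^k}{k!}(t-(k-1)\tau)^k$ for $(k-1)\tau\le t\le k\tau$, $k=1,2,\dots$. Solutions are piecewise differentiable: continuous $x$ with $Ex$ piecewise continuously differentiable satisfying the equation for all $t\in[0,\infty)\setminus\bigcup_{j\in\mathbb{N}_0}\{j\tau\}$. *)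

theory Defs
  imports "HOL-Analysis.Analysis"
begin

section \<open>Matrix notions for type-indexed complex matrices\<close>

definition mpow :: "'a::semiring_1^'n^'n \<Rightarrow> nat \<Rightarrow> 'a^'n^'n" where
  "mpow M k = (((**) M) ^^ k) (mat 1)"

definition nilpotent_mat :: "'a::semiring_1^'n^'n \<Rightarrow> bool" where
  "nilpotent_mat M \<longleftrightarrow> (\<exists>k. mpow M k = 0)"

definition nilpotency_index :: "'a::semiring_1^'n^'n \<Rightarrow> nat" where
  "nilpotency_index M = (LEAST k. mpow M k = 0)"

text \<open>Matrix exponential e^M as the power series.\<close>
definition mexp :: "complex^'n^'n \<Rightarrow> complex^'n^'n" where
  "mexp M = (\<Sum>k. (1 / fact k) *\<^sub>R mpow M k)"

text \<open>Delay matrix exponential e_tau^{D t}.\<close>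
definition delay_exp :: "real \<Rightarrow> complex^'n^'n \<Rightarrow> real \<Rightarrow> complex^'n^'n" where
  "delay_exp \<tau> D t =
     (if t < - \<tau> then 0
      else if t \<le> 0 then mat 1
      else (\<Sum>j\<le>nat \<lceil>t / \<tau>\<rceil>.
              ((t - (real j - 1) * \<tau>) ^ j / fact j) *\<^sub>R mpow D j))"

section \<open>Block structure\<close>

definition blkdiag3 :: "'r::zero^'a^'a \<Rightarrow> 'r^'b^'b \<Rightarrow> 'r^'c^'c \<Rightarrow> 'r^('a+'b+'c)^('a+'b+'c)" where
  "blkdiag3 M1 M2 M3 = (\<chi> i j. case (i, j) of
      (Inl p, Inl q) \<Rightarrow> M1 $ p $ q
    | (Inr (Inl p), Inr (Inl q)) \<Rightarrow> M2 $ p $ q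
    | (Inr (Inr p), Inr (Inr q)) \<Rightarrow> M3 $ p $ q
    | _ \<Rightarrow> 0)"

definition blk1 :: "'r^('a::finite+'b::finite+'c::finite) \<Rightarrow> 'r^'a" where "blk1 v = (\<chi> i. v $ Inl i)"
definition blk2 :: "'r^('a::finite+'b::finite+'c::finite) \<Rightarrow> 'r^'b" where "blk2 v = (\<chi> i. v $ Inr (Inl i))"
definition blk3 :: "'r^('a::finite+'b::finite+'c::finite) \<Rightarrow> 'r^'c" where "blk3 v = (\<chi> i. v $ Inr (Inr i))"

section \<open>Regularity of a matrix triple\<close>

definition regular_triple :: "complex^'n^'n \<Rightarrow> complex^'n^'n \<Rightarrow> complex^'n^'n \<Rightarrow> bool" where
  "regular_triple E A B \<longleftrightarrow>
     (\<exists>l w::complex. det (\<chi> i j. l * E$i$j - A$i$j - w * B$i$j) \<noteq> 0)"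

section \<open>Derivatives\<close>

text \<open>Iterated (two-sided) derivative.\<close>
fun nderiv :: "nat \<Rightarrow> (real \<Rightarrow> 'v::real_normed_vector) \<Rightarrow> real \<Rightarrow> 'v" where
  "nderiv 0 g = g"
| "nderiv (Suc k) g = (\<lambda>t. vector_derivative (nderiv k g) (at t))"

text \<open>Iterated right derivative (used for the piecewise smooth solution component).\<close>
fun rderiv :: "nat \<Rightarrow> (real \<Rightarrow> 'v::real_normed_vector) \<Rightarrow> real \<Rightarrow> 'v" where
  "rderiv 0 g = g"
| "rderiv (Suc k) g = (\<lambda>t. vector_derivative (rderiv k g) (at t within {t..}))"

definition smooth_fun :: "(real \<Rightarrow> 'v::real_normed_vector) \<Rightarrow> bool" where
  "smooth_fun g \<longleftrightarrow> (\<forall>k t. (nderiv k g has_vector_derivative nderiv (Suc k) g t) (at t))"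

section \<open>Solutions of the DDAE  E x' = A x + B x(t-tau) + f,  x = phi on [-tau,0]\<close>

definition ddae_solution ::
  "complex^'n^'n \<Rightarrow> complex^'n^'n \<Rightarrow> complex^'n^'n \<Rightarrow> real \<Rightarrow>
   (real \<Rightarrow> complex^'n) \<Rightarrow> (real \<Rightarrow> complex^'n) \<Rightarrow> (real \<Rightarrow> complex^'n) \<Rightarrow> bool" where
  "ddae_solution E A B \<tau> f \<phi> x \<longleftrightarrow>
     continuous_on {-\<tau>..} x \<and>
     (\<forall>t\<in>{-\<tau>..0}. x t = \<phi> t) \<and>
     (\<forall>j::nat. \<exists>g. continuous_on {real j * \<tau> .. (real j + 1) * \<tau>} g \<and>
        (\<forall>t\<in>{real j * \<tau> <..< (real j + 1) * \<tau>}.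
            ((\<lambda>s. E *v x s) has_vector_derivative g t) (at t))) \<and>
     (\<forall>t\<ge>0. (\<forall>j::nat. t \<noteq> real j * \<tau>) \<longrightarrow>
        ((\<lambda>s. E *v x s) has_vector_derivative (A *v x t + B *v x (t - \<tau>) + f t)) (at t))"

definition uniquely_solvable ::
  "complex^'n^'n \<Rightarrow> complex^'n^'n \<Rightarrow> complex^'n^'n \<Rightarrow> real \<Rightarrow>
   (real \<Rightarrow> complex^'n) \<Rightarrow> (real \<Rightarrow> complex^'n) \<Rightarrow> bool" where
  "uniquely_solvable E A B \<tau> f \<phi> \<longleftrightarrow>
     (\<exists>x. ddae_solution E A B \<tau> f \<phi> x \<and>
          (\<forall>y. ddae_solution E A B \<tau> f \<phi> y \<longrightarrow> (\<forall>t\<ge>-\<tau>. y t = x t)))"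

end

theory Submission
  imports Defs
begin

(* ---- p1/P1.thy ---- *)


typedef ('n::finite) cmat = "UNIV :: (complex^'n^'n) set" morphisms cm Cm by auto
setup_lifting type_definition_cmat

lemma smul_mv: "((c::real) *\<^sub>R M) *v (v::complex^'n) = c *\<^sub>R (M *v v)"
  by (simp add: vec_eq_iff matrix_vector_mult_def scaleR_sum_right)
lemma smul_mm1: "((c::real) *\<^sub>R M) ** (N::complex^'n^'n) = c *\<^sub>R (M ** N)"
  by (simp add: vec_eq_iff matrix_matrix_mult_def scaleR_sum_right)
lemma smul_mm2: "M ** ((c::real) *\<^sub>R (N::complex^'n^'n)) = c *\<^sub>R (M ** N)"
  by (simp add: vec_eq_iff matrix_matrix_mult_def scaleR_sum_right)

instantiation cmat :: (finite) "{real_vector, ring_1}"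
begin
lift_definition zero_cmat :: "'a cmat" is "0" .
lift_definition one_cmat :: "'a cmat" is "mat 1" .
lift_definition plus_cmat :: "'a cmat \<Rightarrow> 'a cmat \<Rightarrow> 'a cmat" is "(+)" .
lift_definition minus_cmat :: "'a cmat \<Rightarrow> 'a cmat \<Rightarrow> 'a cmat" is "(-)" .
lift_definition uminus_cmat :: "'a cmat \<Rightarrow> 'a cmat" is "uminus" .
lift_definition times_cmat :: "'a cmat \<Rightarrow> 'a cmat \<Rightarrow> 'a cmat" is "(**)" .
lift_definition scaleR_cmat :: "real \<Rightarrow> 'a cmat \<Rightarrow> 'a cmat" is "scaleR" .
instance
proof
  show "a + b + c = a + (b + c)" for a b c :: "'a cmat" by transfer (simp add: algebra_simps)
  show "a + b = b + a" for a b :: "'a cmat" by transfer (simp add: algebra_simps)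
  show "0 + a = a" for a :: "'a cmat" by transfer simp
  show "- a + a = 0" for a :: "'a cmat" by transfer simp
  show "a - b = a + - b" for a b :: "'a cmat" by transfer simp
  show "r *\<^sub>R (a + b) = r *\<^sub>R a + r *\<^sub>R b" for r and a b :: "'a cmat" by transfer (simp add: scaleR_right_distrib)
  show "(r + s) *\<^sub>R a = r *\<^sub>R a + s *\<^sub>R a" for r s and a :: "'a cmat" by transfer (simp add: scaleR_left_distrib)
  show "r *\<^sub>R s *\<^sub>R a = (r * s) *\<^sub>R a" for r s and a :: "'a cmat" by transfer simp
  show "1 *\<^sub>R a = a" for a :: "'a cmat" by transfer simp
  show "a * b * c = a * (b * c)" for a b c :: "'a cmat" by transfer (simp add: matrix_mul_assoc)
  show "1 * a = a" for a :: "'a cmat" by transfer simp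
  show "a * 1 = a" for a :: "'a cmat" by transfer simp
  show "(a + b) * c = a * c + b * c" for a b c :: "'a cmat" by transfer (simp add: vec_eq_iff matrix_matrix_mult_def sum.distrib distrib_right)
  show "a * (b + c) = a * b + a * c" for a b c :: "'a cmat" by transfer (simp add: matrix_add_ldistrib)
  show "(0::'a cmat) \<noteq> 1" by transfer (simp add: vec_eq_iff mat_def)
qed
end

instance cmat :: (finite) real_algebra_1
proof
  show "r *\<^sub>R a * b = r *\<^sub>R (a * b)" for r and a b :: "'a cmat" by transfer (simp add: smul_mm1)
  show "a * r *\<^sub>R b = r *\<^sub>R (a * b)" for r and a b :: "'a cmat" by transfer (simp add: smul_mm2)
qed

instantiation cmat :: (finite) real_normed_vector
begin
lift_definition norm_cmat :: "'a cmat \<Rightarrow> real" is "\<lambda>M. onorm ((*v) M)" .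
definition dist_cmat :: "'a cmat \<Rightarrow> 'a cmat \<Rightarrow> real" where "dist_cmat x y = norm (x - y)"
definition sgn_cmat :: "'a cmat \<Rightarrow> 'a cmat" where "sgn_cmat x = x /\<^sub>R norm x"
definition uniformity_cmat :: "('a cmat \<times> 'a cmat) filter" where
  "uniformity_cmat = (INF e\<in>{0<..}. principal {(x, y). dist x y < e})"
definition open_cmat :: "'a cmat set \<Rightarrow> bool" where
  "open_cmat U = (\<forall>x\<in>U. \<forall>\<^sub>F (x', y) in uniformity. x' = x \<longrightarrow> y \<in> U)"
instance
proof
  show "dist x y = norm (x - y)" for x y :: "'a cmat" by (rule dist_cmat_def)
  show "sgn x = x /\<^sub>R norm x" for x :: "'a cmat" by (rule sgn_cmat_def)
  show "(uniformity :: ('a cmat \<times> 'a cmat) filter) = (INF e\<in>{0<..}. principal {(x, y). dist x y < e})"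
    by (rule uniformity_cmat_def)
  show "open U = (\<forall>x\<in>U. \<forall>\<^sub>F (x', y) in uniformity. x' = x \<longrightarrow> y \<in> U)" for U :: "'a cmat set"
    by (rule open_cmat_def)
  show "norm (x + y) \<le> norm x + norm y" for x y :: "'a cmat"
  proof transfer
    fix x y :: "complex^'a^'a"
    have "(*v) (x + y) = (\<lambda>v. (*v) x v + (*v) y v)" by (rule ext) (simp add: matrix_vector_mult_add_rdistrib)
    then show "onorm ((*v) (x + y)) \<le> onorm ((*v) x) + onorm ((*v) y)"
      using onorm_triangle[of "(*v) x" "(*v) y"] by simp
  qed
  show "norm (r *\<^sub>R x) = \<bar>r\<bar> * norm x" for r and x :: "'a cmat"
  proof transfer
    fix r and x :: "complex^'a^'a"
    have "(*v) (r *\<^sub>R x) = (\<lambda>v. r *\<^sub>R (x *v v))" by (rule ext) (simp add: smul_mv)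
    then show "onorm ((*v) (r *\<^sub>R x)) = \<bar>r\<bar> * onorm ((*v) x)"
      using onorm_scaleR[of "(*v) x" r] by simp
  qed
  show "(norm x = 0) = (x = 0)" for x :: "'a cmat"
  proof transfer
    fix x :: "complex^'a^'a"
    have "(\<forall>v. x *v v = 0) \<longleftrightarrow> x = 0" using matrix_eq[of x 0] by simp
    then show "(onorm ((*v) x) = 0) = (x = 0)" using onorm_eq_0[of "(*v) x"] by simp
  qed
qed
end

instance cmat :: (finite) real_normed_algebra_1
proof
  show "norm (x * y) \<le> norm x * norm y" for x y :: "'a cmat"
  proof transfer
    fix x y :: "complex^'a^'a"
    have "onorm ((*v) (x ** y)) = onorm ((*v) x \<circ> (*v) y)"
      by (simp add: o_def matrix_vector_mul_assoc)
    also have "\<dots> \<le> onorm ((*v) x) * onorm ((*v) y)" by (rule onorm_compose) auto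
    finally show "onorm ((*v) (x ** y)) \<le> onorm ((*v) x) * onorm ((*v) y)" .
  qed
  have "(*v) (mat 1) = (\<lambda>x::complex^'a. x)" by (rule ext) simp
  then show "norm (1::'a cmat) = 1" by transfer (simp add: onorm_id)
qed

lemma norm_vec_le_sum: "norm (x::'b::real_normed_vector^'n) \<le> (\<Sum>i\<in>UNIV. norm (x $ i))"
  unfolding norm_vec_def by (rule L2_set_le_sum) auto

lemma entry_le_cmat: "norm (cm X $ i $ j) \<le> norm X"
proof -
  have "norm (cm X $ i $ j) = norm ((cm X *v axis j 1) $ i)"
    by (simp add: matrix_vector_mult_def axis_def if_distrib cong: if_cong)
  also have "\<dots> \<le> norm (cm X *v axis j 1)" by (rule Finite_Cartesian_Product.norm_nth_le)
  also have "\<dots> \<le> onorm ((*v) (cm X)) * norm (axis j (1::complex))"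
    by (rule onorm) simp
  also have "\<dots> = norm X" by (simp add: norm_cmat.rep_eq norm_axis_1)
  finally show ?thesis .
qed

lemma cmat_le_entries: "norm X \<le> (\<Sum>i\<in>UNIV. \<Sum>j\<in>UNIV. norm (cm X $ i $ j))"
proof -
  have "onorm ((*v) (cm X)) \<le> (\<Sum>i\<in>UNIV. \<Sum>j\<in>UNIV. norm (cm X $ i $ j))"
  proof (rule onorm_le)
    fix x :: "complex^'a"
    have "norm (cm X *v x) \<le> (\<Sum>i\<in>UNIV. norm ((cm X *v x) $ i))" by (rule norm_vec_le_sum)
    also have "\<dots> \<le> (\<Sum>i\<in>UNIV. \<Sum>j\<in>UNIV. norm (cm X $ i $ j) * norm x)"
    proof (rule sum_mono)
      fix i
      have "norm ((cm X *v x) $ i) \<le> (\<Sum>j\<in>UNIV. norm (cm X $ i $ j * x $ j))"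
        by (simp add: matrix_vector_mult_def norm_sum)
      also have "\<dots> \<le> (\<Sum>j\<in>UNIV. norm (cm X $ i $ j) * norm x)"
        by (rule sum_mono) (simp add: norm_mult mult_left_mono Finite_Cartesian_Product.norm_nth_le)
      finally show "norm ((cm X *v x) $ i) \<le> (\<Sum>j\<in>UNIV. norm (cm X $ i $ j) * norm x)" .
    qed
    finally show "norm (cm X *v x) \<le> (\<Sum>i\<in>UNIV. \<Sum>j\<in>UNIV. norm (cm X $ i $ j)) * norm x"
      by (simp add: sum_distrib_right)
  qed
  then show ?thesis by (simp add: norm_cmat.rep_eq)
qed

lemma cm_norm_le: "norm (cm X) \<le> real CARD('a) * real CARD('a) * norm (X::'a::finite cmat)"
proof -
  have "norm (cm X) \<le> (\<Sum>i\<in>UNIV. norm (cm X $ i))" by (rule norm_vec_le_sum)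
  also have "\<dots> \<le> (\<Sum>i\<in>(UNIV::'a set). \<Sum>j\<in>(UNIV::'a set). norm X)"
    by (intro sum_mono order.trans[OF norm_vec_le_sum] entry_le_cmat)
  finally show ?thesis by simp
qed

lemma cmat_le_cm: "norm (X::'a::finite cmat) \<le> real CARD('a) * real CARD('a) * norm (cm X)"
proof -
  have "norm X \<le> (\<Sum>i\<in>UNIV. \<Sum>j\<in>UNIV. norm (cm X $ i $ j))" by (rule cmat_le_entries)
  also have "\<dots> \<le> (\<Sum>i\<in>(UNIV::'a set). \<Sum>j\<in>(UNIV::'a set). norm (cm X))"
    by (intro sum_mono order.trans[OF Finite_Cartesian_Product.norm_nth_le Finite_Cartesian_Product.norm_nth_le])
  finally show ?thesis by simp
qed

lemma cm_minus: "cm (X - Y) = cm X - cm Y" by transfer simp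
lemma cm_plus: "cm (X + Y) = cm X + cm Y" by transfer simp
lemma cm_scaleR: "cm (c *\<^sub>R X) = c *\<^sub>R cm X" by transfer simp
lemma cm_times: "cm (X * Y) = cm X ** cm Y" by transfer simp
lemma cm_one: "cm 1 = mat 1" by transfer simp
lemma cm_zero: "cm 0 = 0" by transfer simp

lemma bounded_linear_cm: "bounded_linear (cm :: 'a::finite cmat \<Rightarrow> _)"
proof (rule bounded_linear_intro[where K="real CARD('a) * real CARD('a)"])
  show "cm (x + y) = cm x + cm y" for x y :: "'a cmat" by (rule cm_plus)
  show "cm (r *\<^sub>R x) = r *\<^sub>R cm x" for r and x :: "'a cmat" by (rule cm_scaleR)
  show "norm (cm x) \<le> norm x * (real CARD('a) * real CARD('a))" for x :: "'a cmat"
    using cm_norm_le[of x] by (simp add: mult.commute)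
qed

instance cmat :: (finite) banach
proof
  fix X :: "nat \<Rightarrow> 'a cmat"
  assume "Cauchy X"
  let ?C = "real CARD('a) * real CARD('a)"
  have C: "?C > 0" by simp
  have "Cauchy (\<lambda>n. cm (X n))"
  proof (rule metric_CauchyI)
    fix e :: real assume "e > 0"
    then obtain M where M: "\<forall>m\<ge>M. \<forall>n\<ge>M. dist (X m) (X n) < e / ?C"
      using metric_CauchyD[OF \<open>Cauchy X\<close>, of "e / ?C"] C by auto
    show "\<exists>M. \<forall>m\<ge>M. \<forall>n\<ge>M. dist (cm (X m)) (cm (X n)) < e"
    proof (intro exI allI impI)
      fix m n assume "m \<ge> M" "n \<ge> M"
      have "dist (cm (X m)) (cm (X n)) = norm (cm (X m - X n))" by (simp add: dist_norm cm_minus)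
      also have "\<dots> \<le> ?C * norm (X m - X n)" by (rule cm_norm_le)
      also have "\<dots> < ?C * (e / ?C)" using M \<open>m \<ge> M\<close> \<open>n \<ge> M\<close> C
        by (intro mult_strict_left_mono) (auto simp: dist_norm)
      finally show "dist (cm (X m)) (cm (X n)) < e" using C by simp
    qed
  qed
  then obtain L where L: "(\<lambda>n. cm (X n)) \<longlonglongrightarrow> L" by (auto simp: Cauchy_convergent_iff convergent_def)
  have "X \<longlonglongrightarrow> Cm L"
  proof -
    have "(\<lambda>n. X n - Cm L) \<longlonglongrightarrow> 0"
    proof (rule Lim_null_comparison)
      show "\<forall>\<^sub>F n in sequentially. norm (X n - Cm L) \<le> ?C * norm (cm (X n) - L)"
        using cmat_le_cm[of "X _ - Cm L"] by (simp add: cm_minus Cm_inverse)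
      have "(\<lambda>n. cm (X n) - L) \<longlonglongrightarrow> 0" using L by (simp add: LIM_zero)
      then show "(\<lambda>n. ?C * norm (cm (X n) - L)) \<longlonglongrightarrow> 0"
        by (simp add: tendsto_mult_right_zero tendsto_norm_zero)
    qed
    then show ?thesis by (simp add: LIM_zero_iff)
  qed
  then show "convergent X" by (auto simp: convergent_def)
qed


lemma Cm_times: "Cm (M ** N) = Cm M * Cm N" by (metis Cm_inverse UNIV_I cm_inverse cm_times)
lemma Cm_scaleR: "Cm (c *\<^sub>R M) = c *\<^sub>R Cm M" by (metis Cm_inverse UNIV_I cm_inverse cm_scaleR)
lemma cm_Cm[simp]: "cm (Cm M) = M" by (simp add: Cm_inverse)

lemma mpow_Suc: "mpow M (Suc k) = M ** mpow M k" by (simp add: mpow_def)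
lemma mpow_0[simp]: "mpow M 0 = mat 1" by (simp add: mpow_def)

lemma mpow_cm: "mpow (M::complex^'n::finite^'n) k = cm (Cm M ^ k)"
  by (induction k) (simp_all add: mpow_Suc cm_times cm_one)

lemma mexp_cm: "mexp (M::complex^'n::finite^'n) = cm (exp (Cm M))"
proof -
  have "(\<lambda>k. cm ((Cm M)^k /\<^sub>R fact k)) sums cm (exp (Cm M))"
    by (rule bounded_linear.sums[OF bounded_linear_cm exp_converges])
  moreover have "(\<lambda>k. cm ((Cm M)^k /\<^sub>R fact k)) = (\<lambda>k. (1 / fact k) *\<^sub>R mpow M k)"
    by (rule ext) (simp add: cm_scaleR mpow_cm divide_inverse)
  ultimately show ?thesis unfolding mexp_def by (simp add: sums_iff)
qed

lemma mexp_add: "mexp (s *\<^sub>R A) ** mexp (t *\<^sub>R A) = mexp ((s + t) *\<^sub>R (A::complex^'n::finite^'n))"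
proof -
  have "exp (s *\<^sub>R Cm A) * exp (t *\<^sub>R Cm A) = exp ((s + t) *\<^sub>R Cm A)"
    by (simp add: exp_add_commuting[symmetric] scaleR_left_distrib)
  then show ?thesis by (simp add: mexp_cm Cm_scaleR cm_times[symmetric])
qed

lemma mexp_0: "mexp (0::complex^'n::finite^'n) = mat 1"
proof -
  have "Cm (0::complex^'n^'n) = 0" by (metis cm_zero cm_inverse)
  then show ?thesis by (simp add: mexp_cm cm_one)
qed

lemma mexp_inv: "mexp (s *\<^sub>R A) ** mexp ((-s) *\<^sub>R (A::complex^'n::finite^'n)) = mat 1"
  using mexp_add[of s A "-s"] mexp_0 by simp

lemma exp_commute_gen: "(x::'a::{real_normed_algebra_1,banach}) * y = y * x \<Longrightarrow> exp x * y = y * exp x"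
proof -
  assume c: "x * y = y * x"
  have "exp x * y = (\<Sum>n. x^n /\<^sub>R fact n * y)"
    by (simp add: exp_def suminf_mult2 summable_exp_generic)
  also have "\<dots> = (\<Sum>n. y * (x^n /\<^sub>R fact n))"
    using power_commuting_commutes[OF c] by (simp add: scaleR_conv_of_real mult.assoc)
      (metis (no_types) mult.assoc of_real_def mult_scaleR_left mult_scaleR_right scaleR_conv_of_real power_commuting_commutes[OF c])
  also have "\<dots> = y * exp x"
    using suminf_mult[OF summable_exp_generic[of x], of y] by (simp add: exp_def)
  finally show ?thesis .
qed

lemma mexp_comm: "A ** B = B ** A \<Longrightarrow> mexp (t *\<^sub>R A) ** B = B ** mexp (t *\<^sub>R (A::complex^'n::finite^'n))"
proof -
  assume "A ** B = B ** A"
  then have "Cm A * Cm B = Cm B * Cm A" by (simp add: Cm_times[symmetric])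
  then have "(t *\<^sub>R Cm A) * Cm B = Cm B * (t *\<^sub>R Cm A)" by simp
  then have "exp (t *\<^sub>R Cm A) * Cm B = Cm B * exp (t *\<^sub>R Cm A)" by (rule exp_commute_gen)
  then have "cm (exp (t *\<^sub>R Cm A) * Cm B) = cm (Cm B * exp (t *\<^sub>R Cm A))" by simp
  then show ?thesis by (simp add: mexp_cm Cm_scaleR cm_times)
qed

lemma mexp_deriv: "((\<lambda>t. mexp (t *\<^sub>R A)) has_vector_derivative (mexp (t *\<^sub>R A) ** A)) (at t within S)"
  for A :: "complex^'n::finite^'n"
proof -
  have "((\<lambda>t. cm (exp (t *\<^sub>R Cm A))) has_vector_derivative cm (exp (t *\<^sub>R Cm A) * Cm A)) (at t within S)"
    by (rule bounded_linear.has_vector_derivative[OF bounded_linear_cm exp_scaleR_has_vector_derivative_right])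
  then show ?thesis by (simp add: mexp_cm Cm_scaleR cm_times)
qed

lemma bounded_bilinear_mv: "bounded_bilinear ((*v) :: complex^'n::finite^'n \<Rightarrow> complex^'n \<Rightarrow> complex^'n)"
proof (rule bounded_bilinear.intro)
  show "(a + a') *v b = a *v b + a' *v b" for a a' :: "complex^'n^'n" and b
    by (simp add: matrix_vector_mult_add_rdistrib)
  show "a *v (b + b') = a *v b + a *v b'" for a :: "complex^'n^'n" and b b'
    by (simp add: matrix_vector_right_distrib)
  show "r *\<^sub>R a *v b = r *\<^sub>R (a *v b)" for r and a :: "complex^'n^'n" and b by (rule smul_mv)
  show "a *v r *\<^sub>R b = r *\<^sub>R (a *v b)" for r and a :: "complex^'n^'n" and b
    by (simp add: vec_eq_iff matrix_vector_mult_def scaleR_sum_right)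
  show "\<exists>K. \<forall>(a::complex^'n^'n) (b::complex^'n). norm (a *v b) \<le> norm a * norm b * K"
  proof -
    have *: "norm (a *v b) \<le> norm a * norm b * (real CARD('n) * real CARD('n))" for a :: "complex^'n^'n" and b
    proof -
    have "norm (a *v b) \<le> norm (Cm a) * norm b"
      using onorm[OF matrix_vector_mul_bounded_linear, of a b] by (simp add: norm_cmat.rep_eq)
    also have "\<dots> \<le> (real CARD('n) * real CARD('n) * norm a) * norm b"
      using cmat_le_cm[of "Cm a"] by (simp add: mult_right_mono)
    finally show "norm (a *v b) \<le> norm a * norm b * (real CARD('n) * real CARD('n))"
      by (simp add: algebra_simps)
    qed
    then show ?thesis by blast
  qed
qed


(* ---- p1/P2.thy ---- *)


section \<open>Smooth functions\<close>
declare nderiv.simps(2)[simp del]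
lemma nderiv_Suc: "nderiv (Suc k) g = (\<lambda>t. vector_derivative (nderiv k g) (at t))" by (rule nderiv.simps(2))


lemma nderiv_Suc': "nderiv (Suc k) g = nderiv k (nderiv 1 g)"
proof (induction k)
  case 0 then show ?case by (simp add: nderiv.simps(2))
next
  case (Suc k)
  have "nderiv (Suc (Suc k)) g = (\<lambda>t. vector_derivative (nderiv (Suc k) g) (at t))" by (simp add: nderiv.simps(2))
  also have "\<dots> = (\<lambda>t. vector_derivative (nderiv k (nderiv 1 g)) (at t))" using Suc by simp
  also have "\<dots> = nderiv (Suc k) (nderiv 1 g)" by (simp add: nderiv.simps(2))
  finally show ?case by (simp add: nderiv_Suc)
qed

lemma nderiv_1: "nderiv 1 g = (\<lambda>t. vector_derivative g (at t))" by (simp add: nderiv.simps(2))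

lemma smooth_deriv: "smooth_fun g \<Longrightarrow> (g has_vector_derivative nderiv 1 g t) (at t)"
  unfolding smooth_fun_def by (metis nderiv.simps(1) One_nat_def)

lemma smooth_derivs: "smooth_fun g \<Longrightarrow> (nderiv k g has_vector_derivative nderiv (Suc k) g t) (at t)"
  unfolding smooth_fun_def by blast

lemma smooth_D: "smooth_fun g \<Longrightarrow> smooth_fun (nderiv 1 g)"
  unfolding smooth_fun_def by (metis nderiv_Suc')

lemma smooth_cont: "smooth_fun g \<Longrightarrow> continuous_on S g"
  by (meson continuous_at_imp_continuous_on has_vector_derivative_continuous smooth_deriv)

lemma smooth_linear_nderiv:
  assumes "bounded_linear F" "smooth_fun g"
  shows "nderiv k (\<lambda>t. F (g t)) = (\<lambda>t. F (nderiv k g t))"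
proof (induction k)
  case 0 then show ?case by simp
next
  case (Suc k)
  have "nderiv (Suc k) (\<lambda>t. F (g t)) = (\<lambda>t. vector_derivative (\<lambda>t. F (nderiv k g t)) (at t))"
    using Suc by (simp add: nderiv_Suc)
  also have "\<dots> = (\<lambda>t. F (nderiv (Suc k) g t))"
    by (rule ext, rule vector_derivative_at,
        rule bounded_linear.has_vector_derivative[OF assms(1) smooth_derivs[OF assms(2)]])
  finally show ?case by (simp add: nderiv_Suc)
qed

lemma smooth_linear:
  assumes "bounded_linear F" "smooth_fun g"
  shows "smooth_fun (\<lambda>t. F (g t))"
proof -
  have "\<forall>k t. ((\<lambda>t. F (nderiv k g t)) has_vector_derivative F (nderiv (Suc k) g t)) (at t)"
    by (auto intro!: bounded_linear.has_vector_derivative[OF assms(1) smooth_derivs[OF assms(2)]])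
  then show ?thesis unfolding smooth_fun_def smooth_linear_nderiv[OF assms] .
qed

lemma smooth_mv: "smooth_fun g \<Longrightarrow> smooth_fun (\<lambda>t. (M::complex^'n^'m) *v g t)"
  by (rule smooth_linear) auto

lemma smooth_mv_nderiv: "smooth_fun g \<Longrightarrow> nderiv k (\<lambda>t. (M::complex^'n^'m) *v g t) = (\<lambda>t. M *v nderiv k g t)"
  by (rule smooth_linear_nderiv) auto

lemma smooth_add_nderiv:
  assumes "smooth_fun g" "smooth_fun h"
  shows "nderiv k (\<lambda>t. g t + h t) = (\<lambda>t. nderiv k g t + nderiv k h t)"
proof (induction k)
  case 0 then show ?case by simp
next
  case (Suc k)
  have "nderiv (Suc k) (\<lambda>t. g t + h t) = (\<lambda>t. vector_derivative (\<lambda>t. nderiv k g t + nderiv k h t) (at t))"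
    using Suc by (simp add: nderiv_Suc)
  also have "\<dots> = (\<lambda>t. nderiv (Suc k) g t + nderiv (Suc k) h t)"
    by (rule ext, rule vector_derivative_at,
        intro has_vector_derivative_add smooth_derivs assms)
  finally show ?case by (simp add: nderiv_Suc)
qed

lemma smooth_add: "smooth_fun g \<Longrightarrow> smooth_fun h \<Longrightarrow> smooth_fun (\<lambda>t. g t + h t)"
proof -
  assume a: "smooth_fun g" "smooth_fun h"
  have "\<forall>k t. ((\<lambda>t. nderiv k g t + nderiv k h t) has_vector_derivative (nderiv (Suc k) g t + nderiv (Suc k) h t)) (at t)"
    by (auto intro!: has_vector_derivative_add smooth_derivs a)
  then show ?thesis unfolding smooth_fun_def[of "\<lambda>t. g t + h t"] smooth_add_nderiv[OF a] .
qed

lemma smooth_uminus: "smooth_fun g \<Longrightarrow> smooth_fun (\<lambda>t. - g t)"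
proof -
  assume "smooth_fun g"
  have "bounded_linear (\<lambda>x::'a. - x)" by (rule bounded_linear_minus[OF bounded_linear_ident])
  from smooth_linear[OF this \<open>smooth_fun g\<close>] show ?thesis .
qed

lemma smooth_diff: "smooth_fun g \<Longrightarrow> smooth_fun h \<Longrightarrow> smooth_fun (\<lambda>t. g t - h t)"
  using smooth_add[of g "\<lambda>t. - h t"] smooth_uminus[of h] by simp

lemma nderiv_const: "nderiv k (\<lambda>t. c) = (if k = 0 then (\<lambda>t. c) else (\<lambda>t. 0))"
proof -
  have "nderiv (Suc k) (\<lambda>t. c) = (\<lambda>t. 0)" for k
    by (induction k) (auto simp: nderiv_Suc)
  then show ?thesis by (cases k) auto
qed

lemma smooth_const: "smooth_fun (\<lambda>t. c)"
  unfolding smooth_fun_def nderiv_const by auto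

lemma smooth_sum_nderiv:
  assumes "\<And>i. i \<in> I \<Longrightarrow> smooth_fun (g i)" "finite I"
  shows "smooth_fun (\<lambda>t. \<Sum>i\<in>I. g i t) \<and> nderiv k (\<lambda>t. \<Sum>i\<in>I. g i t) = (\<lambda>t. \<Sum>i\<in>I. nderiv k (g i) t)"
  using assms(2,1)
proof (induction I rule: finite_induct)
  case empty
  then show ?case using smooth_const[of 0] by (simp add: nderiv_const)
next
  case (insert x F)
  then have s: "smooth_fun (\<lambda>t. \<Sum>i\<in>F. g i t)" and n: "nderiv k (\<lambda>t. \<Sum>i\<in>F. g i t) = (\<lambda>t. \<Sum>i\<in>F. nderiv k (g i) t)"
    by auto
  have gx: "smooth_fun (g x)" using insert by auto
  have e: "(\<lambda>t. \<Sum>i\<in>insert x F. g i t) = (\<lambda>t. g x t + (\<Sum>i\<in>F. g i t))"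
    using insert by simp
  show ?case unfolding e using smooth_add[OF gx s] smooth_add_nderiv[OF gx s] insert
    by (simp add: n)
qed

lemma smooth_shift_nderiv:
  assumes "smooth_fun g"
  shows "nderiv k (\<lambda>t. g (t + c)) = (\<lambda>t. nderiv k g (t + c))"
proof (induction k)
  case 0 then show ?case by simp
next
  case (Suc k)
  have "nderiv (Suc k) (\<lambda>t. g (t + c)) = (\<lambda>t. vector_derivative (\<lambda>t. nderiv k g (t + c)) (at t))"
    using Suc by (simp add: nderiv_Suc)
  also have "\<dots> = (\<lambda>t. nderiv (Suc k) g (t + c))"
  proof (rule ext, rule vector_derivative_at)
    fix t
    have "((nderiv k g) \<circ> (\<lambda>t. t + c) has_vector_derivative 1 *\<^sub>R nderiv (Suc k) g (t + c)) (at t)"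
      by (rule vector_diff_chain_at) (auto intro!: derivative_eq_intros smooth_derivs assms)
    then show "((\<lambda>t. nderiv k g (t + c)) has_vector_derivative nderiv (Suc k) g (t + c)) (at t)"
      by (simp add: o_def)
  qed
  finally show ?case by (simp add: nderiv_Suc)
qed

lemma smooth_shift: "smooth_fun g \<Longrightarrow> smooth_fun (\<lambda>t. g (t + c))"
proof -
  assume g: "smooth_fun g"
  have "\<forall>k t. ((\<lambda>t. nderiv k g (t + c)) has_vector_derivative nderiv (Suc k) g (t + c)) (at t)"
  proof (intro allI)
    fix k t
    have "((nderiv k g) \<circ> (\<lambda>t. t + c) has_vector_derivative 1 *\<^sub>R nderiv (Suc k) g (t + c)) (at t)"
      by (rule vector_diff_chain_at) (auto intro!: derivative_eq_intros smooth_derivs g)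
    then show "((\<lambda>t. nderiv k g (t + c)) has_vector_derivative nderiv (Suc k) g (t + c)) (at t)"
      by (simp add: o_def)
  qed
  then show ?thesis unfolding smooth_fun_def smooth_shift_nderiv[OF g] .
qed

lemma smooth_vd: "smooth_fun g \<Longrightarrow> vector_derivative g (at t) = nderiv 1 g t"
  by (simp only: nderiv_1)

section \<open>Density / continuity lemmas\<close>

lemma nonmult_right:
  assumes tau: "\<tau> > 0" and t0: "t0 \<ge> 0"
  shows "\<exists>d>0. \<forall>r. t0 < r \<and> r < t0 + d \<longrightarrow> (\<forall>j::nat. r \<noteq> real j * \<tau>)"
proof -
  define m where "m = nat (floor (t0 / \<tau>))"
  have fl: "0 \<le> \<lfloor>t0 / \<tau>\<rfloor>" using t0 tau by simp
  have rm: "real m = real_of_int \<lfloor>t0 / \<tau>\<rfloor>" unfolding m_def using fl by simp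
  have q1: "real m \<le> t0 / \<tau>" unfolding rm by (rule of_int_floor_le)
  have q2: "t0 / \<tau> < real m + 1" unfolding rm by (rule real_of_int_floor_add_one_gt)
  have m1: "real m * \<tau> \<le> t0" using q1 tau by (simp add: pos_le_divide_eq)
  have m2: "t0 < (real m + 1) * \<tau>" using q2 tau by (simp add: pos_divide_less_eq)
  show ?thesis
  proof (intro exI conjI allI impI)
    show "(real m + 1) * \<tau> - t0 > 0" using m2 by simp
    fix r and j :: nat assume r: "t0 < r \<and> r < t0 + ((real m + 1) * \<tau> - t0)"
    show "r \<noteq> real j * \<tau>"
    proof
      assume rj: "r = real j * \<tau>"
      then have "real m * \<tau> < real j * \<tau>" "real j * \<tau> < (real m + 1) * \<tau>" using r m1 by auto
      then have "real m < real j" "real j < real m + 1" using tau by auto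
      then have "m < j" "j < Suc m" by (simp_all add: of_nat_less_iff[symmetric] del: of_nat_less_iff)
      then show False by simp
    qed
  qed
qed

lemma zero_by_density:
  fixes u :: "real \<Rightarrow> 'a::real_normed_vector"
  assumes tau: "\<tau> > 0"
    and cont: "continuous_on {-\<tau>..} u"
    and z: "\<And>t. t > 0 \<Longrightarrow> (\<forall>j::nat. t \<noteq> real j * \<tau>) \<Longrightarrow> u (t - \<tau>) = 0"
    and s: "s \<ge> -\<tau>"
  shows "u s = 0"
proof -
  obtain d where d: "d > 0" "\<And>r. s + \<tau> < r \<Longrightarrow> r < s + \<tau> + d \<Longrightarrow> (\<forall>j::nat. r \<noteq> real j * \<tau>)"
    using nonmult_right[OF tau, of "s + \<tau>"] s by auto
  have ev: "\<forall>\<^sub>F r in at_right s. u r = 0"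
  proof (rule eventually_at_rightI[of s "s + d"])
    show "s < s + d" using d by simp
    fix r assume r: "r \<in> {s<..<s + d}"
    then have "s + \<tau> < r + \<tau>" "r + \<tau> < s + \<tau> + d" by auto
    then have nm: "\<forall>j::nat. r + \<tau> \<noteq> real j * \<tau>" by (rule d(2))
    have "r + \<tau> > 0" using s r by simp
    from z[OF this nm] have "u (r + \<tau> - \<tau>) = 0" .
    then show "u r = 0" by simp
  qed
  have "(u \<longlongrightarrow> u s) (at s within {-\<tau>..})"
    using cont s unfolding continuous_on_def by blast
  then have "(u \<longlongrightarrow> u s) (at_right s)"
    by (rule tendsto_within_subset) (use s in auto)
  moreover have "(u \<longlongrightarrow> 0) (at_right s)"
    using ev by (rule tendsto_eventually)
  ultimately show ?thesis by (rule tendsto_unique[OF trivial_limit_at_right_real])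
qed

lemma zero_on_closed_interval:
  fixes a b t :: real
  assumes "continuous_on {a..b} u" "\<And>t. a < t \<Longrightarrow> t < b \<Longrightarrow> u t = 0" "a < b" "t \<in> {a..b}"
  shows "u t = (0::'a::real_normed_vector)"
proof -
  have "closure {a<..<b} = {a..b}" using closure_greaterThanLessThan[OF assms(3)] .
  then show ?thesis using continuous_constant_on_closure[of "{a<..<b}" u 0 t] assms by auto
qed

section \<open>Derivatives of functions with values in a closed set\<close>

lemma deriv_in_subspace:
  fixes f :: "real \<Rightarrow> 'a::euclidean_space"
  assumes d: "(f has_vector_derivative f') (at x)" and sub: "subspace V" and fV: "\<And>y. f y \<in> V"
  shows "f' \<in> V"
proof -
  have "(\<lambda>h. norm (f (x + h) - f x - h *\<^sub>R f') / norm h) \<midarrow>0\<rightarrow> 0"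
    using d unfolding has_vector_derivative_def has_derivative_at by simp
  then have "(\<lambda>h. (f (x + h) - f x) /\<^sub>R h - f') \<midarrow>0\<rightarrow> 0"
  proof (rule Lim_transform_bound[rotated])
    show "\<forall>\<^sub>F h in at 0. norm ((f (x + h) - f x) /\<^sub>R h - f') \<le> norm (norm (f (x + h) - f x - h *\<^sub>R f') / norm h)"
    proof (rule eventually_at_topological[THEN iffD2], intro exI[of _ UNIV] conjI ballI impI; simp?)
      fix h :: real assume "h \<noteq> 0"
      have "(f (x + h) - f x) /\<^sub>R h - f' = inverse h *\<^sub>R (f (x + h) - f x - h *\<^sub>R f')"
        using \<open>h \<noteq> 0\<close> by (simp add: scaleR_diff_right)
      then show "norm ((f (x + h) - f x) /\<^sub>R h - f') \<le> norm (f (x + h) - f x - h *\<^sub>R f') / \<bar>h\<bar>"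
        by (simp add: divide_inverse mult.commute)
    qed
  qed
  then have lim: "((\<lambda>h. (f (x + h) - f x) /\<^sub>R h) \<longlongrightarrow> f') (at (0::real))"
    by (simp add: LIM_zero_iff)
  show ?thesis
  proof (rule Lim_in_closed_set[OF closed_subspace[OF sub] _ _ lim])
    show "\<forall>\<^sub>F h in at (0::real). (f (x + h) - f x) /\<^sub>R h \<in> V"
      using fV sub by (auto intro!: always_eventually subspace_scale subspace_diff)
    show "at (0::real) \<noteq> bot" by simp
  qed
qed


(* ---- p1/P3.thy ---- *)


section \<open>Matrix powers\<close>

lemma mpow_add: "mpow (M::complex^'n::finite^'n) (a + b) = mpow M a ** mpow M b"
  by (simp add: mpow_cm power_add cm_times)

lemma mpow_comm: "M ** N = N ** M \<Longrightarrow> mpow (M::complex^'n::finite^'n) a ** N = N ** mpow M a"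
proof -
  assume "M ** N = N ** M"
  then have "Cm M * Cm N = Cm N * Cm M" by (simp add: Cm_times[symmetric])
  then have "Cm M ^ a * Cm N = Cm N * Cm M ^ a" by (rule power_commuting_commutes)
  then have "cm (Cm M ^ a * Cm N) = cm (Cm N * Cm M ^ a)" by simp
  then show ?thesis by (simp add: mpow_cm cm_times)
qed

lemma mpow_mult_comm: "M ** N = N ** M \<Longrightarrow> mpow ((M::complex^'n::finite^'n) ** N) a = mpow M a ** mpow N a"
proof (induction a)
  case 0 then show ?case by simp
next
  case (Suc a)
  have "mpow (M ** N) (Suc a) = M ** N ** (mpow M a ** mpow N a)" using Suc by (simp add: mpow_Suc)
  also have "\<dots> = M ** (N ** mpow M a) ** mpow N a" by (simp add: matrix_mul_assoc)
  also have "\<dots> = M ** (mpow M a ** N) ** mpow N a" using mpow_comm[OF Suc.prems, of a] by simp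
  also have "\<dots> = mpow M (Suc a) ** mpow N (Suc a)" by (simp add: mpow_Suc matrix_mul_assoc)
  finally show ?case .
qed

lemma mpow_zero_mono: "mpow (M::complex^'n::finite^'n) k = 0 \<Longrightarrow> k \<le> m \<Longrightarrow> mpow M m = 0"
  using mpow_add[of M k "m - k"] by simp

lemma mv_comm: "M ** N = N ** M \<Longrightarrow> M *v (N *v v) = N *v (M *v (v::complex^'n))"
  by (simp add: matrix_vector_mul_assoc)

section \<open>Commuting nilpotent matrices\<close>

definition Tsp :: "complex^'n^'n \<Rightarrow> complex^'n^'n \<Rightarrow> (complex^'n) set \<Rightarrow> (complex^'n) set" where
  "Tsp P Q V = vec.span ((*v) P ` V \<union> (*v) Q ` V)"

definition VV :: "complex^'n^'n \<Rightarrow> complex^'n^'n \<Rightarrow> nat \<Rightarrow> (complex^'n) set" where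
  "VV P Q k = (Tsp P Q ^^ k) UNIV"

definition XX :: "complex^'n^'n \<Rightarrow> complex^'n^'n \<Rightarrow> nat \<Rightarrow> (complex^'n) set" where
  "XX P Q k = {mpow P a *v (mpow Q (k - a) *v v) | a v. a \<le> k}"

lemma VV_Suc: "VV P Q (Suc k) = Tsp P Q (VV P Q k)" by (simp add: VV_def)
lemma VV_0: "VV P Q 0 = UNIV" by (simp add: VV_def)

lemma Tsp_mono: "V \<subseteq> W \<Longrightarrow> Tsp P Q V \<subseteq> Tsp P Q W"
  unfolding Tsp_def by (intro vec.span_mono) auto

lemma VV_decr: "VV P Q (Suc k) \<subseteq> VV P Q k"
proof (induction k)
  case 0 then show ?case by (simp add: VV_0)
next
  case (Suc k)
  then show ?case using Tsp_mono[OF Suc.IH, of P Q] by (simp add: VV_Suc)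
qed

lemma VV_antimono: "k \<le> m \<Longrightarrow> VV P Q m \<subseteq> VV P Q k"
proof (induction m)
  case 0 then show ?case by simp
next
  case (Suc m)
  show ?case
  proof (cases "k = Suc m")
    case False
    then have "k \<le> m" using Suc.prems by simp
    then show ?thesis using Suc.IH VV_decr[of P Q m] by blast
  qed simp
qed

lemma VV_subspace: "vec.subspace (VV P Q k)"
  by (cases k) (auto simp: VV_Suc VV_0 Tsp_def vec.subspace_UNIV vec.subspace_span)

lemma VV_P: "v \<in> VV P Q k \<Longrightarrow> P *v v \<in> VV P Q (Suc k)"
  unfolding VV_Suc Tsp_def by (rule vec.span_base) auto
lemma VV_Q: "v \<in> VV P Q k \<Longrightarrow> Q *v v \<in> VV P Q (Suc k)"
  unfolding VV_Suc Tsp_def by (rule vec.span_base) auto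

lemma VV_XX:
  assumes c: "P ** Q = Q ** P"
  shows "VV P Q k \<subseteq> vec.span (XX P Q k)"
proof (induction k)
  case 0
  have "v \<in> XX P Q 0" for v unfolding XX_def by (auto intro!: exI[of _ v])
  then show ?case by (auto simp: VV_0 intro: vec.span_base)
next
  case (Suc k)
  have PX: "(*v) P ` XX P Q k \<subseteq> XX P Q (Suc k)"
  proof
    fix w assume "w \<in> (*v) P ` XX P Q k"
    then obtain a v where av: "a \<le> k" "w = P *v (mpow P a *v (mpow Q (k - a) *v v))"
      unfolding XX_def by auto
    then have "w = mpow P (Suc a) *v (mpow Q (Suc k - Suc a) *v v)"
      by (simp add: mpow_Suc matrix_vector_mul_assoc matrix_mul_assoc)
    then show "w \<in> XX P Q (Suc k)" unfolding XX_def using av(1) by fastforce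
  qed
  have QX: "(*v) Q ` XX P Q k \<subseteq> XX P Q (Suc k)"
  proof
    fix w assume "w \<in> (*v) Q ` XX P Q k"
    then obtain a v where av: "a \<le> k" "w = Q *v (mpow P a *v (mpow Q (k - a) *v v))"
      unfolding XX_def by auto
    have "Q ** mpow P a = mpow P a ** Q" using mpow_comm[OF c, of a] by simp
    then have "Q ** (mpow P a ** mpow Q (k - a)) = mpow P a ** (Q ** mpow Q (k - a))"
      by (metis matrix_mul_assoc)
    then have "w = mpow P a *v (mpow Q (Suc k - a) *v v)"
      using av by (simp add: mpow_Suc matrix_vector_mul_assoc Suc_diff_le)
    then show "w \<in> XX P Q (Suc k)" unfolding XX_def using av(1) by fastforce
  qed
  have "(*v) P ` VV P Q k \<subseteq> vec.span (XX P Q (Suc k))"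
  proof -
    have "(*v) P ` VV P Q k \<subseteq> (*v) P ` vec.span (XX P Q k)" using Suc by auto
    also have "\<dots> = vec.span ((*v) P ` XX P Q k)" by (simp add: vec.span_image)
    also have "\<dots> \<subseteq> vec.span (XX P Q (Suc k))" using PX by (rule vec.span_mono)
    finally show ?thesis .
  qed
  moreover have "(*v) Q ` VV P Q k \<subseteq> vec.span (XX P Q (Suc k))"
  proof -
    have "(*v) Q ` VV P Q k \<subseteq> (*v) Q ` vec.span (XX P Q k)" using Suc by auto
    also have "\<dots> = vec.span ((*v) Q ` XX P Q k)" by (simp add: vec.span_image)
    also have "\<dots> \<subseteq> vec.span (XX P Q (Suc k))" using QX by (rule vec.span_mono)
    finally show ?thesis .
  qed
  ultimately show ?case unfolding VV_Suc Tsp_def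
    by (intro vec.span_minimal) (auto simp: vec.subspace_span)
qed

lemma XX_zero:
  assumes p: "mpow P p = 0" and q: "mpow Q q = 0" and k: "p + q \<le> k"
  shows "XX P Q k \<subseteq> {0}"
proof
  fix w assume "w \<in> XX P Q k"
  then obtain a v where av: "a \<le> k" "w = mpow P a *v (mpow Q (k - a) *v v)"
    unfolding XX_def by auto
  show "w \<in> {0}"
  proof (cases "p \<le> a")
    case True
    then have "mpow P a = 0" by (rule mpow_zero_mono[OF p])
    then show ?thesis using av by simp
  next
    case False
    then have "q \<le> k - a" using k by simp
    then have "mpow Q (k - a) = 0" by (rule mpow_zero_mono[OF q])
    then show ?thesis using av by simp
  qed
qed

lemma VV_fix_zero:
  assumes c: "P ** Q = Q ** P" and p: "mpow P p = 0" and q: "mpow Q q = 0"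
    and fx: "VV P Q (Suc m) = VV P Q m"
  shows "VV P Q m = {0}"
proof -
  have "VV P Q (m + j) = VV P Q m" for j
  proof (induction j)
    case 0 then show ?case by simp
  next
    case (Suc j)
    have "VV P Q (m + Suc j) = Tsp P Q (VV P Q (m + j))" by (simp add: VV_Suc)
    also have "\<dots> = Tsp P Q (VV P Q m)" using Suc by simp
    also have "\<dots> = VV P Q m" using fx by (simp add: VV_Suc)
    finally show ?case .
  qed
  then have "VV P Q m = VV P Q (m + (p + q))" by simp
  also have "\<dots> \<subseteq> vec.span (XX P Q (m + (p + q)))" by (rule VV_XX[OF c])
  also have "\<dots> \<subseteq> vec.span {0}" by (rule vec.span_mono[OF XX_zero[OF p q]]) simp
  also have "\<dots> = {0}" by simp
  finally have "VV P Q m \<subseteq> {0}" .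
  moreover have "0 \<in> VV P Q m" using VV_subspace vec.subspace_0 by blast
  ultimately show ?thesis by blast
qed

lemma VV_dim:
  fixes P Q :: "complex^'n::finite^'n"
  assumes c: "P ** Q = Q ** P" and p: "mpow P p = 0" and q: "mpow Q q = 0"
  shows "VV P Q m = {0} \<or> vec.dim (VV P Q m) + m \<le> CARD('n::finite)"
proof (induction m)
  case 0
  show ?case by (simp add: VV_0 vec.dim_UNIV card_cart_basis)
next
  case (Suc m)
  show ?case
  proof (cases "VV P Q m = {0}")
    case True
    then have "VV P Q (Suc m) \<subseteq> {0}" using VV_decr[of P Q m] by simp
    moreover have "0 \<in> VV P Q (Suc m)" using VV_subspace vec.subspace_0 by blast
    ultimately show ?thesis by blast
  next
    case False
    then have d: "vec.dim (VV P Q m) + m \<le> CARD('n)" using Suc by simp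
    have ne: "VV P Q (Suc m) \<noteq> VV P Q m" using VV_fix_zero[OF c p q] False by blast
    then have "VV P Q (Suc m) \<subset> VV P Q m" using VV_decr[of P Q m] by blast
    then have "vec.span (VV P Q (Suc m)) \<subset> vec.span (VV P Q m)"
      using VV_subspace[of P Q] by (simp add: vec.span_eq_iff[THEN iffD2])
    then have "vec.dim (VV P Q (Suc m)) < vec.dim (VV P Q m)" by (rule vec.dim_psubset)
    then show ?thesis using d by simp
  qed
qed

lemma VV_card_zero:
  assumes c: "P ** Q = Q ** P" and nP: "nilpotent_mat P" and nQ: "nilpotent_mat Q"
    and k: "CARD('n::finite) \<le> k"
  shows "VV P Q k = ({0} :: (complex^'n) set)"
proof -
  obtain p q where p: "mpow P p = 0" and q: "mpow Q q = 0"
    using nP nQ unfolding nilpotent_mat_def by blast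
  have "VV P Q k = {0} \<or> vec.dim (VV P Q k) + k \<le> CARD('n)" by (rule VV_dim[OF c p q])
  then show ?thesis
  proof
    assume "vec.dim (VV P Q k) + k \<le> CARD('n)"
    then have d0: "vec.dim (VV P Q k) = 0" using k by linarith
    have "VV P Q k \<subseteq> {0}" using vec.dim_eq_0 d0 by blast
    moreover have "0 \<in> VV P Q k" using VV_subspace vec.subspace_0 by blast
    ultimately show ?thesis by blast
  qed
qed

section \<open>Words\<close>

fun wp :: "complex^'n^'n \<Rightarrow> complex^'n^'n \<Rightarrow> bool list \<Rightarrow> complex^'n^'n" where
  "wp P Q [] = mat 1"
| "wp P Q (b # bs) = (if b then P else Q) ** wp P Q bs"

lemma wp_VV: "wp P Q bs *v v \<in> VV P Q (length bs)"
proof (induction bs)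
  case Nil then show ?case by (simp add: VV_0)
next
  case (Cons b bs)
  then show ?case using VV_P VV_Q by (auto simp: matrix_vector_mul_assoc[symmetric])
qed

lemma wp_zero:
  assumes c: "P ** Q = Q ** P" and nP: "nilpotent_mat P" and nQ: "nilpotent_mat Q"
    and k: "CARD('n::finite) \<le> length bs"
  shows "wp P Q bs = (0::complex^'n^'n)"
proof -
  have "wp P Q bs *v v = 0" for v
    using wp_VV[of P Q bs v] VV_card_zero[OF c nP nQ k] by simp
  then show ?thesis by (simp add: matrix_eq)
qed

lemma wp_comm:
  assumes "M ** P = P ** M" "M ** Q = Q ** M"
  shows "wp P Q bs ** M = M ** wp P Q bs"
proof (induction bs)
  case Nil then show ?case by simp
next
  case (Cons b bs)
  have "wp P Q (b # bs) ** M = (if b then P else Q) ** (wp P Q bs ** M)"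
    by (simp add: matrix_mul_assoc)
  also have "\<dots> = (if b then P else Q) ** M ** wp P Q bs" using Cons by (simp add: matrix_mul_assoc)
  also have "\<dots> = M ** wp P Q (b # bs)" using assms by (simp add: matrix_mul_assoc)
  finally show ?case .
qed


(* ---- p1/P4.thy ---- *)


declare nderiv.simps(2)[simp del]

lemma minv: "invertible (A::'a::semiring_1^'n^'n) \<Longrightarrow> A ** matrix_inv A = mat 1 \<and> matrix_inv A ** A = mat 1"
  unfolding matrix_inv_def invertible_def by (rule someI_ex)

lemma minv_comm:
  assumes "invertible J" "J ** N = N ** (J::complex^'n::finite^'n)"
  shows "matrix_inv J ** N = N ** matrix_inv J"
proof -
  have "matrix_inv J ** N = matrix_inv J ** N ** (J ** matrix_inv J)" using minv[OF assms(1)] by simp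
  also have "\<dots> = matrix_inv J ** (N ** J) ** matrix_inv J" by (simp add: matrix_mul_assoc)
  also have "\<dots> = matrix_inv J ** J ** N ** matrix_inv J" using assms(2) by (metis matrix_mul_assoc)
  also have "\<dots> = N ** matrix_inv J" using minv[OF assms(1)] by simp
  finally show ?thesis .
qed

lemma scaleR_cvec: "c *\<^sub>R (x::complex^'n) = complex_of_real c *s x"
  by (simp add: vec_eq_iff of_real_def)

lemma vsub_real: "vec.subspace (V::(complex^'n::finite) set) \<Longrightarrow> subspace V"
  unfolding subspace_def using vec.subspace_0 vec.subspace_add vec.subspace_scale
  by (metis scaleR_cvec)

lemma nilp_prod:
  assumes "M ** N = N ** M" "nilpotent_mat N"
  shows "nilpotent_mat ((M::complex^'n::finite^'n) ** N)"
proof -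
  obtain k where "mpow N k = 0" using assms(2) unfolding nilpotent_mat_def by blast
  then show ?thesis unfolding nilpotent_mat_def using mpow_mult_comm[OF assms(1), of k] by auto
qed

lemma x3_formula:
  fixes N Na J :: "complex^'c::finite^'c" and y h :: "real \<Rightarrow> complex^'c" and \<tau> :: real
  assumes tau: "\<tau> > 0"
    and invJ: "invertible J"
    and cJN: "J ** N = N ** J" and cJNa: "J ** Na = Na ** J" and cNNa: "N ** Na = Na ** N"
    and nN: "nilpotent_mat N" and nNa: "nilpotent_mat Na"
    and cont: "continuous_on {-\<tau>..} y"
    and de: "\<And>t. t \<ge> 0 \<Longrightarrow> (\<forall>j::nat. t \<noteq> real j * \<tau>) \<Longrightarrow>
       ((\<lambda>s. N *v y s) has_vector_derivative (Na *v y t + J *v y (t - \<tau>) + h t)) (at t)"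
    and sh: "smooth_fun h"
  defines "P \<equiv> matrix_inv J ** N" and "Q \<equiv> matrix_inv J ** Na"
    and "g \<equiv> \<lambda>s. matrix_inv J *v h s"
    and "L \<equiv> \<lambda>G s. (matrix_inv J ** N) *v vector_derivative G (at s) - (matrix_inv J ** Na) *v G s"
  shows "\<forall>t \<ge> -\<tau>. y t = - (\<Sum>i<CARD('c). (L ^^ i) g (t + (real i + 1) * \<tau>))"
proof -
  let ?n = "CARD('c)"
  define Ji where "Ji = matrix_inv J"
  have JiJ: "Ji ** J = mat 1" "J ** Ji = mat 1" using minv[OF invJ] by (auto simp: Ji_def)
  have JiJv: "matrix_inv J *v (J *v v) = v" for v
    using JiJ by (simp add: matrix_vector_mul_assoc Ji_def)
  have cJiN: "Ji ** N = N ** Ji" using minv_comm[OF invJ cJN] by (simp add: Ji_def)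
  have cJiNa: "Ji ** Na = Na ** Ji" using minv_comm[OF invJ cJNa] by (simp add: Ji_def)
  have cPQ: "P ** Q = Q ** P"
  proof -
    have "P ** Q = Ji ** (N ** Ji) ** Na" by (simp add: P_def Q_def Ji_def matrix_mul_assoc)
    also have "\<dots> = Ji ** Ji ** (N ** Na)" using cJiN by (metis matrix_mul_assoc)
    also have "\<dots> = Ji ** Ji ** (Na ** N)" using cNNa by simp
    also have "\<dots> = Ji ** (Ji ** Na) ** N" by (metis matrix_mul_assoc)
    also have "\<dots> = Ji ** (Na ** Ji) ** N" using cJiNa by simp
    also have "\<dots> = Q ** P" using cJiNa by (simp add: P_def Q_def Ji_def matrix_mul_assoc)
    finally show ?thesis .
  qed
  have nP: "nilpotent_mat P" unfolding P_def Ji_def[symmetric] by (rule nilp_prod[OF cJiN nN])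
  have nQ: "nilpotent_mat Q" unfolding Q_def Ji_def[symmetric] by (rule nilp_prod[OF cJiNa nNa])
  have sg: "smooth_fun g" unfolding g_def by (rule smooth_mv[OF sh])
  have L_sm: "L G = (\<lambda>s. P *v nderiv 1 G s - Q *v G s)" for G
    unfolding L_def nderiv_1 P_def Q_def by simp
  have Lapp: "L G s = P *v nderiv 1 G s - Q *v G s" for G s
    unfolding L_sm by simp
  have LS: "(L ^^ Suc i) g r = P *v nderiv 1 ((L ^^ i) g) r - Q *v (L ^^ i) g r" for i r
  proof -
    have "(L ^^ Suc i) g r = L ((L ^^ i) g) r" by simp
    also have "\<dots> = P *v nderiv 1 ((L ^^ i) g) r - Q *v (L ^^ i) g r" by (rule Lapp)
    finally show ?thesis .
  qed
  have sL: "smooth_fun (L G)" if "smooth_fun G" for G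
    unfolding L_sm by (intro smooth_diff smooth_mv smooth_D that)
  have sLi: "smooth_fun ((L ^^ i) g)" for i
    by (induction i) (auto simp: sg sL)
  \<comment> \<open>values lie in the subspaces VV\<close>
  have inVV: "(L ^^ k) g s \<in> VV P Q k" for k s
  proof (induction k arbitrary: s)
    case 0 then show ?case by (simp add: VV_0)
  next
    case (Suc k)
    have d: "((L ^^ k) g has_vector_derivative nderiv 1 ((L ^^ k) g) s) (at s)"
      by (rule smooth_deriv[OF sLi])
    have "nderiv 1 ((L ^^ k) g) s \<in> VV P Q k"
      by (rule deriv_in_subspace[OF d vsub_real[OF VV_subspace]]) (rule Suc.IH)
    then have "P *v nderiv 1 ((L ^^ k) g) s \<in> VV P Q (Suc k)" by (rule VV_P)
    moreover have "Q *v (L ^^ k) g s \<in> VV P Q (Suc k)" by (rule VV_Q[OF Suc.IH])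
    ultimately show ?case using vec.subspace_diff[OF VV_subspace] by (simp only: LS)
  qed
  have Ln: "(L ^^ ?n) g s = 0" for s
    using inVV[of ?n s] VV_card_zero[OF cPQ nP nQ, of ?n] by simp
  \<comment> \<open>the function H\<close>
  define H where "H = (\<lambda>s. \<Sum>i<?n. (L ^^ i) g (s + (real i + 1) * \<tau>))"
  have sH: "smooth_fun H" and dH: "nderiv 1 H = (\<lambda>s. \<Sum>i<?n. nderiv 1 ((L ^^ i) g) (s + (real i + 1) * \<tau>))"
    using smooth_sum_nderiv[of "{..<?n}" "\<lambda>i s. (L ^^ i) g (s + (real i + 1) * \<tau>)" 1]
    unfolding H_def by (auto simp: smooth_shift sLi smooth_shift_nderiv)
  have LH: "L H s = (\<Sum>i<?n. (L ^^ Suc i) g (s + (real i + 1) * \<tau>))" for s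
  proof -
    have "L H s = P *v nderiv 1 H s - Q *v H s" by (simp add: Lapp)
    also have "\<dots> = (\<Sum>i<?n. P *v nderiv 1 ((L ^^ i) g) (s + (real i + 1) * \<tau>) - Q *v (L ^^ i) g (s + (real i + 1) * \<tau>))"
      unfolding dH by (simp add: H_def vec.sum sum_subtractf)
    also have "\<dots> = (\<Sum>i<?n. (L ^^ Suc i) g (s + (real i + 1) * \<tau>))"
      by (simp only: LS)
    finally show ?thesis .
  qed
  have Hid: "H s = g (s + \<tau>) + L H (s + \<tau>)" for s
  proof -
    obtain m where m: "?n = Suc m" using not0_implies_Suc[of ?n] by auto
    have "H s = (\<Sum>i<Suc m. (L ^^ i) g (s + (real i + 1) * \<tau>))" by (simp add: H_def m)
    also have "\<dots> = g (s + \<tau>) + (\<Sum>i<m. (L ^^ Suc i) g (s + (real (Suc i) + 1) * \<tau>))"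
      by (subst sum.lessThan_Suc_shift) simp
    also have "(\<Sum>i<m. (L ^^ Suc i) g (s + (real (Suc i) + 1) * \<tau>)) = (\<Sum>i<Suc m. (L ^^ Suc i) g (s + \<tau> + (real i + 1) * \<tau>))"
    proof -
      have "(L ^^ Suc m) g (s + \<tau> + (real m + 1) * \<tau>) = 0" using Ln m by simp
      then show ?thesis by (simp add: algebra_simps)
    qed
    also have "\<dots> = L H (s + \<tau>)" by (simp add: LH m)
    finally show ?thesis .
  qed
  define e where "e = (\<lambda>s. y s + H s)"
  have econt: "continuous_on {-\<tau>..} e" unfolding e_def
    by (intro continuous_on_add cont smooth_cont[OF sH])
  have ede: "((\<lambda>s. P *v e s) has_vector_derivative (Q *v e t + e (t - \<tau>))) (at t)"
    if t: "t \<ge> 0" "\<forall>j::nat. t \<noteq> real j * \<tau>" for t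
  proof -
    have d1: "((\<lambda>s. Ji *v (N *v y s)) has_vector_derivative Ji *v (Na *v y t + J *v y (t - \<tau>) + h t)) (at t)"
      by (rule bounded_linear.has_vector_derivative[OF matrix_vector_mul_bounded_linear de[OF t]])
    have d2: "((\<lambda>s. P *v H s) has_vector_derivative P *v nderiv 1 H t) (at t)"
      by (rule bounded_linear.has_vector_derivative[OF matrix_vector_mul_bounded_linear smooth_deriv[OF sH]])
    have "((\<lambda>s. Ji *v (N *v y s) + P *v H s) has_vector_derivative
           Ji *v (Na *v y t + J *v y (t - \<tau>) + h t) + P *v nderiv 1 H t) (at t)"
      by (rule has_vector_derivative_add[OF d1 d2])
    moreover have "(\<lambda>s. Ji *v (N *v y s) + P *v H s) = (\<lambda>s. P *v e s)"
      by (simp add: e_def P_def Ji_def matrix_vector_mul_assoc matrix_vector_right_distrib)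
    moreover have "Ji *v (Na *v y t + J *v y (t - \<tau>) + h t) + P *v nderiv 1 H t = Q *v e t + e (t - \<tau>)"
    proof -
      have "e (t - \<tau>) = y (t - \<tau>) + g t + L H t" using Hid[of "t - \<tau>"] by (simp add: e_def)
      then show ?thesis
        by (simp add: e_def Lapp Q_def g_def Ji_def matrix_vector_mul_assoc[symmetric]
            matrix_vector_right_distrib JiJv algebra_simps)
    qed
    ultimately show ?thesis by simp
  qed
  \<comment> \<open>downward induction over word length\<close>
  have down: "\<forall>bs. length bs = ?n - k \<longrightarrow> (\<forall>s \<ge> -\<tau>. wp P Q bs *v e s = 0)" if "k \<le> ?n" for k
    using that
  proof (induction k)
    case 0
    show ?case using wp_zero[OF cPQ nP nQ] by auto
  next
    case (Suc k)
    show ?case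
    proof (rule allI, rule impI)
      fix bs :: "bool list" assume len: "length bs = ?n - Suc k"
      have IH1: "\<forall>s\<ge>-\<tau>. wp P Q (True # bs) *v e s = 0" and IH2: "\<forall>s\<ge>-\<tau>. wp P Q (False # bs) *v e s = 0"
      proof -
        have "length (True # bs) = ?n - k" "length (False # bs) = ?n - k" using len Suc.prems by auto
        then show "\<forall>s\<ge>-\<tau>. wp P Q (True # bs) *v e s = 0" "\<forall>s\<ge>-\<tau>. wp P Q (False # bs) *v e s = 0"
          using Suc.IH Suc.prems by (meson Suc_leD)+
      qed
      let ?W = "wp P Q bs"
      have wP: "?W ** P = P ** ?W" and wQ: "?W ** Q = Q ** ?W"
        by (rule wp_comm; simp add: cPQ)+
      have z: "?W *v e (t - \<tau>) = 0" if t: "t > 0" "\<forall>j::nat. t \<noteq> real j * \<tau>" for t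
      proof -
        have d: "((\<lambda>s. ?W *v (P *v e s)) has_vector_derivative ?W *v (Q *v e t + e (t - \<tau>))) (at t)"
          by (rule bounded_linear.has_vector_derivative[OF matrix_vector_mul_bounded_linear ede]) (use t in auto)
        have eq0: "?W *v (P *v e s) = 0" if "s \<in> {-\<tau><..}" for s
        proof -
          have "?W *v (P *v e s) = wp P Q (True # bs) *v e s"
            by (simp add: matrix_vector_mul_assoc wP)
          then show ?thesis using IH1 that by simp
        qed
        have "((\<lambda>s. 0) has_vector_derivative ?W *v (Q *v e t + e (t - \<tau>))) (at t)"
          by (rule has_vector_derivative_transform_within_open[OF d, of "{-\<tau><..}"]) (use t tau eq0 in auto)
        then have "?W *v (Q *v e t + e (t - \<tau>)) = 0"
          using vector_derivative_unique_at has_vector_derivative_const by blast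
        moreover have "?W *v (Q *v e t) = 0"
        proof -
          have "?W *v (Q *v e t) = wp P Q (False # bs) *v e t"
            by (simp add: matrix_vector_mul_assoc wQ)
          then show ?thesis using IH2 t tau by simp
        qed
        ultimately show ?thesis by (simp add: matrix_vector_right_distrib)
      qed
      have wc: "continuous_on {-\<tau>..} (\<lambda>s. ?W *v e s)"
        by (rule bounded_linear.continuous_on[OF matrix_vector_mul_bounded_linear econt])
      show "\<forall>s\<ge>-\<tau>. ?W *v e s = 0"
        using zero_by_density[OF tau wc] z by blast
    qed
  qed
  have "\<forall>s\<ge>-\<tau>. e s = 0" using down[of ?n] by (auto dest: spec[of _ "[]"])
  then show ?thesis unfolding e_def H_def by (auto simp: add_eq_0_iff)
qed


(* ---- p1/P5.thy ---- *)


declare nderiv.simps(2)[simp del]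
declare rderiv.simps(2)[simp del]

lemma rderiv_eq:
  fixes y G :: "real \<Rightarrow> 'v::real_normed_vector"
  assumes sG: "smooth_fun G" and ab: "a < b" and eq: "\<forall>r\<in>{a..b}. y r = G r"
  shows "s \<in> {a..<b} \<Longrightarrow> rderiv i y s = nderiv i G s"
proof (induction i arbitrary: s)
  case 0 then show ?case using eq by auto
next
  case (Suc i)
  have "rderiv (Suc i) y s = vector_derivative (rderiv i y) (at s within {s..})"
    by (simp add: rderiv.simps(2))
  also have "\<dots> = vector_derivative (nderiv i G) (at s within {s..})"
  proof (rule vector_derivative_cong_eq)
    show "\<forall>\<^sub>F x in nhds s. x \<in> {s..} \<longrightarrow> rderiv i y x = nderiv i G x"
      using eventually_nhds_in_open[of "{..<b}" s] Suc.prems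
    proof -
      have "\<forall>\<^sub>F x in nhds s. x \<in> {..<b}" using Suc.prems by (intro eventually_nhds_in_open) auto
      then show ?thesis
        by eventually_elim (use Suc.IH Suc.prems in auto)
    qed
  qed auto
  also have "\<dots> = nderiv (Suc i) G s"
  proof (rule vector_derivative_within)
    show "at s within {s..} \<noteq> bot" by (simp add: at_within_Ici_at_right)
    show "(nderiv i G has_vector_derivative nderiv (Suc i) G s) (at s within {s..})"
      by (rule has_vector_derivative_at_within[OF smooth_derivs[OF sG]])
  qed
  finally show ?case .
qed

lemma floor_interval:
  assumes tau: "\<tau> > 0" and t: "t \<ge> 0"
  shows "\<exists>j::nat. real j * \<tau> \<le> t \<and> t < (real j + 1) * \<tau>"
proof -
  define m where "m = nat (floor (t / \<tau>))"
  have fl: "0 \<le> \<lfloor>t / \<tau>\<rfloor>" using t tau by simp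
  have rm: "real m = real_of_int \<lfloor>t / \<tau>\<rfloor>" unfolding m_def using fl by simp
  have q1: "real m \<le> t / \<tau>" unfolding rm by (rule of_int_floor_le)
  have q2: "t / \<tau> < real m + 1" unfolding rm by (rule real_of_int_floor_add_one_gt)
  have "real m * \<tau> \<le> t" using q1 tau by (simp add: pos_le_divide_eq)
  moreover have "t < (real m + 1) * \<tau>" using q2 tau by (simp add: pos_divide_less_eq)
  ultimately show ?thesis by blast
qed

lemma open_interval_nonmult:
  assumes tau: "\<tau> > 0" and t: "real j * \<tau> < t" "t < (real j + 1) * \<tau>"
  shows "\<forall>m::nat. t \<noteq> real m * \<tau>"
proof (intro allI notI)
  fix m :: nat assume "t = real m * \<tau>"
  then have "real j < real m" "real m < real j + 1" using t tau by auto
  then have "j < m" "m < Suc j" by (simp_all add: of_nat_less_iff[symmetric] del: of_nat_less_iff)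
  then show False by simp
qed

lemma nil_ode_zero:
  fixes Nt :: "complex^'b::finite^'b" and e :: "real \<Rightarrow> complex^'b"
  assumes z: "mpow Nt \<zeta> = 0"
    and d: "\<And>t. t \<in> {a<..<b} \<Longrightarrow> ((\<lambda>s. Nt *v e s) has_vector_derivative e t) (at t)"
  shows "\<forall>t\<in>{a<..<b}. e t = 0"
proof -
  have "\<forall>t\<in>{a<..<b}. mpow Nt (\<zeta> - k) *v e t = 0" if "k \<le> \<zeta>" for k
    using that
  proof (induction k)
    case 0 then show ?case using z by simp
  next
    case (Suc k)
    let ?m = "\<zeta> - Suc k"
    have m1: "mpow Nt ?m ** Nt = mpow Nt (\<zeta> - k)"
    proof -
      have a: "mpow Nt (?m + 1) = mpow Nt ?m ** mpow Nt 1" by (rule mpow_add)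
      have b: "?m + 1 = \<zeta> - k" using Suc.prems by simp
      have c: "mpow Nt 1 = Nt" by (simp add: mpow_def)
      show ?thesis using a b c by metis
    qed
    show ?case
    proof
      fix t assume t: "t \<in> {a<..<b}"
      have d1: "((\<lambda>s. mpow Nt ?m *v (Nt *v e s)) has_vector_derivative mpow Nt ?m *v e t) (at t)"
        by (rule bounded_linear.has_vector_derivative[OF matrix_vector_mul_bounded_linear d[OF t]])
      have "((\<lambda>s. 0) has_vector_derivative mpow Nt ?m *v e t) (at t)"
      proof (rule has_vector_derivative_transform_within_open[OF d1, of "{a<..<b}"])
        fix s assume "s \<in> {a<..<b}"
        then show "mpow Nt ?m *v (Nt *v e s) = 0"
          using Suc by (simp add: matrix_vector_mul_assoc m1)
      qed (use t in auto)
      then show "mpow Nt ?m *v e t = 0"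
        using vector_derivative_unique_at has_vector_derivative_const by blast
    qed
  qed
  from this[of \<zeta>] show ?thesis by simp
qed


lemma smooth_nderiv: "smooth_fun G \<Longrightarrow> smooth_fun (nderiv i G)"
proof (induction i arbitrary: G)
  case 0 then show ?case by simp
next
  case (Suc i)
  then show ?case unfolding nderiv_Suc' by (intro Suc.IH smooth_D)
qed

lemma smooth_shift_minus: "smooth_fun g \<Longrightarrow> smooth_fun (\<lambda>t. g (t - c))"
  using smooth_shift[of g "-c"] by simp

lemma smooth_shift_minus_nderiv: "smooth_fun g \<Longrightarrow> nderiv k (\<lambda>t. g (t - c)) = (\<lambda>t. nderiv k g (t - c))"
  using smooth_shift_nderiv[of g k "-c"] by simp

lemma mat1_nz: "(mat 1 :: complex^'n^'n) \<noteq> 0"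
proof
  assume "(mat 1 :: complex^'n^'n) = 0"
  then have "(mat 1 :: complex^'n^'n) $ undefined $ undefined = 0" by simp
  then show False by (simp add: mat_def)
qed

lemma x2_formula:
  fixes N J Bm :: "complex^'b::finite^'b" and y h \<phi> :: "real \<Rightarrow> complex^'b" and \<tau> :: real
  assumes tau: "\<tau> > 0"
    and invJ: "invertible J"
    and cJN: "J ** N = N ** J"
    and nN: "nilpotent_mat N"
    and cont: "continuous_on {-\<tau>..} y"
    and init: "\<forall>t\<in>{-\<tau>..0}. y t = \<phi> t"
    and s\<phi>: "smooth_fun \<phi>"
    and de: "\<And>t. t \<ge> 0 \<Longrightarrow> (\<forall>j::nat. t \<noteq> real j * \<tau>) \<Longrightarrow>
       ((\<lambda>s. N *v y s) has_vector_derivative (J *v y t + Bm *v y (t - \<tau>) + h t)) (at t)"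
    and sh: "smooth_fun h"
  defines "Nt \<equiv> matrix_inv J ** N" and "Bt \<equiv> matrix_inv J ** Bm"
    and "g \<equiv> \<lambda>s. matrix_inv J *v h s"
    and "\<zeta> \<equiv> nilpotency_index (matrix_inv J ** N)"
  shows "\<forall>t\<ge>0. y t = - (\<Sum>i<\<zeta>. mpow Nt i *v (Bt *v rderiv i y (t - \<tau>) + nderiv i g t))"
proof -
  define Ji where "Ji = matrix_inv J"
  have JiJ: "Ji ** J = mat 1" "J ** Ji = mat 1" using minv[OF invJ] by (auto simp: Ji_def)
  have JiJv: "Ji *v (J *v v) = v" for v
    using JiJ by (simp add: matrix_vector_mul_assoc)
  have cJiN: "Ji ** N = N ** Ji" using minv_comm[OF invJ cJN] by (simp add: Ji_def)
  have nNt: "nilpotent_mat Nt" unfolding Nt_def Ji_def[symmetric] by (rule nilp_prod[OF cJiN nN])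
  have zNt: "mpow Nt \<zeta> = 0"
    using nNt unfolding \<zeta>_def Nt_def[symmetric] nilpotency_index_def nilpotent_mat_def by (rule LeastI_ex)
  have \<zeta>pos: "\<zeta> = Suc (\<zeta> - 1)"
  proof (cases \<zeta>)
    case 0 then show ?thesis using zNt mat1_nz[where 'n='b] by simp
  qed simp
  have sg: "smooth_fun g" unfolding g_def by (rule smooth_mv[OF sh])
  define Gs where "Gs = rec_nat \<phi> (\<lambda>j G t. - (\<Sum>i<\<zeta>. mpow Nt i *v (Bt *v nderiv i G (t - \<tau>) + nderiv i g t)))"
  have Gs0: "Gs 0 = \<phi>" by (simp add: Gs_def)
  have GsS: "Gs (Suc j) = (\<lambda>t. - (\<Sum>i<\<zeta>. mpow Nt i *v (Bt *v nderiv i (Gs j) (t - \<tau>) + nderiv i g t)))" for j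
    by (simp add: Gs_def)
  have sGs: "smooth_fun (Gs j)" for j
  proof (induction j)
    case 0 then show ?case using s\<phi> Gs0 by simp
  next
    case (Suc j)
    show ?case unfolding GsS
      by (intro smooth_uminus conjunct1[OF smooth_sum_nderiv] smooth_mv smooth_add smooth_shift_minus
          smooth_nderiv Suc sg) auto
  qed
  have C: "\<forall>t\<in>{(real j - 1) * \<tau> .. real j * \<tau>}. y t = Gs j t" for j
  proof (induction j)
    case 0 then show ?case using init Gs0 by simp
  next
    case (Suc j)
    define a where "a = real j * \<tau>"
    define b where "b = (real j + 1) * \<tau>"
    have ab: "a < b" using tau by (simp add: a_def b_def algebra_simps)
    have a0: "a \<ge> 0" using tau by (simp add: a_def)
    define hh where "hh = (\<lambda>t. Bt *v Gs j (t - \<tau>) + g t)"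
    have shh: "smooth_fun hh" unfolding hh_def
      by (intro smooth_add smooth_mv smooth_shift_minus sGs sg)
    have nhh: "nderiv i hh t = Bt *v nderiv i (Gs j) (t - \<tau>) + nderiv i g t" for i t
    proof -
      have s1: "smooth_fun (\<lambda>t. Bt *v Gs j (t - \<tau>))" by (intro smooth_mv smooth_shift_minus sGs)
      show ?thesis unfolding hh_def smooth_add_nderiv[OF s1 sg] smooth_mv_nderiv[OF smooth_shift_minus[OF sGs]]
        smooth_shift_minus_nderiv[OF sGs] by simp
    qed
    define K where "K = (\<lambda>t. \<Sum>i<\<zeta>. mpow Nt i *v nderiv i hh t)"
    have sK: "smooth_fun K" and dK: "nderiv 1 K = (\<lambda>t. \<Sum>i<\<zeta>. nderiv 1 (\<lambda>t. mpow Nt i *v nderiv i hh t) t)"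
      using smooth_sum_nderiv[of "{..<\<zeta>}" "\<lambda>i t. mpow Nt i *v nderiv i hh t" 1] smooth_mv smooth_nderiv[OF shh]
      unfolding K_def by auto
    have dK': "nderiv 1 K t = (\<Sum>i<\<zeta>. mpow Nt i *v nderiv (Suc i) hh t)" for t
      unfolding dK smooth_mv_nderiv[OF smooth_nderiv[OF shh]] by (simp add: nderiv_1 nderiv_Suc)
    have Kid: "K t = hh t + Nt *v nderiv 1 K t" for t
    proof -
      let ?D = "\<lambda>i. nderiv i hh t"
      have "Nt *v nderiv 1 K t = (\<Sum>i<\<zeta>. mpow Nt (Suc i) *v ?D (Suc i))"
        unfolding dK' by (simp add: vec.sum matrix_vector_mul_assoc mpow_Suc)
      also have "\<dots> = (\<Sum>i<\<zeta> - 1. mpow Nt (Suc i) *v ?D (Suc i))"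
        using zNt \<zeta>pos by (metis (no_types, lifting) add.right_neutral matrix_vector_mult_0 sum.lessThan_Suc)
      finally have 1: "Nt *v nderiv 1 K t = (\<Sum>i<\<zeta> - 1. mpow Nt (Suc i) *v ?D (Suc i))" .
      have "K t = (\<Sum>i<Suc (\<zeta> - 1). mpow Nt i *v ?D i)" unfolding K_def using \<zeta>pos by simp
      also have "\<dots> = hh t + (\<Sum>i<\<zeta> - 1. mpow Nt (Suc i) *v ?D (Suc i))"
        by (subst sum.lessThan_Suc_shift) simp
      finally show ?thesis using 1 by simp
    qed
    define e where "e = (\<lambda>s. y s + K s)"
    have ede: "((\<lambda>s. Nt *v e s) has_vector_derivative e t) (at t)" if t: "t \<in> {a<..<b}" for t
    proof -
      have t0: "t \<ge> 0" and nm: "\<forall>m::nat. t \<noteq> real m * \<tau>"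
        using t a0 open_interval_nonmult[OF tau, of j t] by (auto simp: a_def b_def)
      have yprev: "y (t - \<tau>) = Gs j (t - \<tau>)"
        using Suc.IH t by (auto simp: a_def b_def algebra_simps)
      have d1: "((\<lambda>s. Ji *v (N *v y s)) has_vector_derivative Ji *v (J *v y t + Bm *v y (t - \<tau>) + h t)) (at t)"
        by (rule bounded_linear.has_vector_derivative[OF matrix_vector_mul_bounded_linear de[OF t0 nm]])
      have d2: "((\<lambda>s. Nt *v K s) has_vector_derivative Nt *v nderiv 1 K t) (at t)"
        by (rule bounded_linear.has_vector_derivative[OF matrix_vector_mul_bounded_linear smooth_deriv[OF sK]])
      have "((\<lambda>s. Ji *v (N *v y s) + Nt *v K s) has_vector_derivative
           Ji *v (J *v y t + Bm *v y (t - \<tau>) + h t) + Nt *v nderiv 1 K t) (at t)"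
        by (rule has_vector_derivative_add[OF d1 d2])
      moreover have "(\<lambda>s. Ji *v (N *v y s) + Nt *v K s) = (\<lambda>s. Nt *v e s)"
        by (simp add: e_def Nt_def Ji_def matrix_vector_mul_assoc matrix_vector_right_distrib)
      moreover have "Ji *v (J *v y t + Bm *v y (t - \<tau>) + h t) + Nt *v nderiv 1 K t = e t"
        using Kid[of t] yprev
        by (simp add: e_def hh_def Bt_def g_def Ji_def[symmetric] matrix_vector_mul_assoc[symmetric]
            matrix_vector_right_distrib JiJv algebra_simps)
      ultimately show ?thesis by simp
    qed
    have ez: "\<forall>t\<in>{a<..<b}. e t = 0" by (rule nil_ode_zero[OF zNt ede])
    have GsK: "Gs (Suc j) t = - K t" for t
      unfolding GsS K_def nhh by simp
    have uc: "continuous_on {a..b} (\<lambda>t. y t - Gs (Suc j) t)"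
    proof (intro continuous_on_diff)
      show "continuous_on {a..b} y" using cont by (rule continuous_on_subset) (use a0 tau in auto)
      show "continuous_on {a..b} (Gs (Suc j))" by (rule smooth_cont[OF sGs])
    qed
    have "y t - Gs (Suc j) t = 0" if "t \<in> {a..b}" for t
    proof (rule zero_on_closed_interval[OF uc _ ab that])
      fix t assume "a < t" "t < b"
      then show "y t - Gs (Suc j) t = 0" using ez GsK by (simp add: e_def)
    qed
    then show ?case by (simp add: a_def b_def algebra_simps)
  qed
  show ?thesis
  proof (intro allI impI)
    fix t :: real assume t: "t \<ge> 0"
    obtain j :: nat where j: "real j * \<tau> \<le> t" "t < (real j + 1) * \<tau>" using floor_interval[OF tau t] by blast
    have yt: "y t = Gs (Suc j) t" using C[of "Suc j"] j by (simp add: algebra_simps)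
    have rd: "rderiv i y (t - \<tau>) = nderiv i (Gs j) (t - \<tau>)" for i
    proof (rule rderiv_eq[OF sGs _ C])
      show "(real j - 1) * \<tau> < real j * \<tau>" using tau by (simp add: algebra_simps)
      show "t - \<tau> \<in> {(real j - 1) * \<tau>..<real j * \<tau>}" using j by (simp add: algebra_simps)
    qed
    show "y t = - (\<Sum>i<\<zeta>. mpow Nt i *v (Bt *v rderiv i y (t - \<tau>) + nderiv i g t))"
      unfolding yt GsS rd by simp
  qed
qed


(* ---- p1/P6.thy ---- *)


section \<open>Truncated powers\<close>

definition pp :: "nat \<Rightarrow> real \<Rightarrow> real" where
  "pp j z = (if 0 \<le> z then z ^ j / fact j else 0)"

lemma pp_alt: "j \<ge> 1 \<Longrightarrow> pp j z = (max z 0) ^ j / fact j"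
  by (auto simp: pp_def max_def)

lemma pp_cont: "j \<ge> 1 \<Longrightarrow> continuous_on S (pp j)"
proof -
  assume "j \<ge> 1"
  then have "pp j = (\<lambda>z. (max z 0) ^ j / fact j)" by (auto simp: pp_alt)
  then show ?thesis by (auto intro!: continuous_intros)
qed

lemma pp_isCont: "j \<ge> 1 \<Longrightarrow> isCont (pp j) z"
  using pp_cont[of j UNIV] by (simp add: continuous_on_eq_continuous_at)

lemma pp_zero: "j \<ge> 1 \<Longrightarrow> pp j 0 = 0" by (simp add: pp_def)

lemma fact_ratio: "j \<ge> 1 \<Longrightarrow> real j / fact j = 1 / fact (j - 1)"
proof -
  assume "j \<ge> 1"
  then obtain k where k: "j = Suc k" by (cases j) auto
  show ?thesis unfolding k by (simp add: fact_Suc)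
qed

lemma pp_deriv:
  assumes j: "j \<ge> 1" and z: "j = 1 \<longrightarrow> z \<noteq> 0"
  shows "(pp j has_real_derivative pp (j - 1) z) (at z)"
proof (cases "z > 0")
  case True
  have d: "((\<lambda>z. z ^ j / fact j) has_real_derivative (real j * z ^ (j - 1)) / fact j) (at z)"
    by (auto intro!: derivative_eq_intros)
  have e: "(real j * z ^ (j - 1)) / fact j = pp (j - 1) z"
    using True fact_ratio[OF j] j by (simp add: pp_def field_simps)
  show ?thesis
  proof (rule has_field_derivative_transform_within_open[OF d[unfolded e], of "{0<..}"])
    show "\<And>y. y \<in> {0<..} \<Longrightarrow> y ^ j / fact j = pp j y" by (simp add: pp_def)
  qed (use True in auto)
next
  case False
  show ?thesis
  proof (cases "z < 0")
    case True
    have e: "pp (j - 1) z = 0" using True j by (simp add: pp_def)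
    have d: "((\<lambda>z. 0) has_real_derivative pp (j - 1) z) (at z)" using e by simp
    show ?thesis
    proof (rule has_field_derivative_transform_within_open[OF d, of "{..<0}"])
      show "\<And>y. y \<in> {..<0} \<Longrightarrow> 0 = pp j y" by (simp add: pp_def)
    qed (use True in auto)
  next
    case False
    with \<open>\<not> z > 0\<close> have z0: "z = 0" by simp
    then have j2: "j \<ge> 2" using z j by auto
    define g where "g = (\<lambda>z. pp (j - 1) z / real j)"
    have "(pp j has_real_derivative g 0) (at 0)"
    proof (rule CARAT_DERIV[THEN iffD2], intro exI conjI allI)
      fix w
      show "pp j w - pp j 0 = g w * (w - 0)"
      proof (cases "0 \<le> w")
        case True
        obtain k where k: "j = Suc (Suc k)" using j2 by (metis add_2_eq_Suc le_Suc_ex)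
        show ?thesis using True unfolding g_def pp_def k by (simp add: field_simps)
      qed (use j2 in \<open>simp add: g_def pp_def\<close>)
      show "isCont g 0" unfolding g_def using j2 by (intro continuous_intros pp_isCont) auto
      show "g 0 = g 0" ..
    qed
    moreover have "g 0 = pp (j - 1) 0" using j2 by (simp add: g_def pp_zero)
    ultimately show ?thesis using z0 by simp
  qed
qed

lemma pp0_deriv: "z \<noteq> 0 \<Longrightarrow> (pp 0 has_real_derivative 0) (at z)"
proof -
  assume z: "z \<noteq> 0"
  have d: "((\<lambda>y. pp 0 z) has_real_derivative 0) (at z)" by simp
  show ?thesis
  proof (rule has_field_derivative_transform_within_open[OF d, of "if z > 0 then {0<..} else {..<0}"])
    show "\<And>y. y \<in> (if z > 0 then {0<..} else {..<0}) \<Longrightarrow> pp 0 z = pp 0 y"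
      using z by (auto simp: pp_def split: if_splits)
  qed (use z in auto)
qed

section \<open>Convolution-type integrals\<close>

definition Phi :: "nat \<Rightarrow> real \<Rightarrow> real \<Rightarrow> (real \<Rightarrow> 'v::euclidean_space) \<Rightarrow> real \<Rightarrow> 'v" where
  "Phi j a b v x = integral {a..b} (\<lambda>s. pp j (x - s) *\<^sub>R v s)"

lemma pp_restrict: fixes v :: "real \<Rightarrow> 'v::real_vector" shows "(\<lambda>s. pp j (x - s) *\<^sub>R v s) = (\<lambda>s. if s \<in> {..x} then ((x - s) ^ j / fact j) *\<^sub>R v s else 0)"
  by (auto simp: pp_def fun_eq_iff)

lemma Phi_restrict:
  fixes v :: "real \<Rightarrow> 'v::euclidean_space"
  assumes cv: "continuous_on {a..b} v"
  shows "(\<lambda>s. pp j (x - s) *\<^sub>R v s) integrable_on {a..b}"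
    and "Phi j a b v x = integral {a..min b x} (\<lambda>s. ((x - s) ^ j / fact j) *\<^sub>R v s)"
proof -
  have I: "{..x} \<inter> {a..b} = {a..min b x}" by auto
  have "continuous_on {a..min b x} (\<lambda>s. ((x - s) ^ j / fact j) *\<^sub>R v s)"
    by (intro continuous_intros continuous_on_subset[OF cv]) auto
  then have "(\<lambda>s. ((x - s) ^ j / fact j) *\<^sub>R v s) integrable_on {a..min b x}"
    by (rule integrable_continuous_interval)
  then show "(\<lambda>s. pp j (x - s) *\<^sub>R v s) integrable_on {a..b}"
    unfolding pp_restrict integrable_restrict_Int I .
  show "Phi j a b v x = integral {a..min b x} (\<lambda>s. ((x - s) ^ j / fact j) *\<^sub>R v s)"
    unfolding Phi_def pp_restrict integral_restrict_Int I ..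
qed

lemma integral_point: "integral {a..a::real} f = 0"
  using integral_refl[of a f] by (simp add: cbox_interval)

lemma integral_clmp:
  fixes a b x :: real
  assumes "a \<le> b"
  shows "integral {a..min b x} f = integral {a..max a (min b x)} f"
proof (cases "x < a")
  case True
  then have "{a..min b x} = {}" by auto
  moreover have "max a (min b x) = a" using True by simp
  ultimately show ?thesis by (simp add: integral_point)
next
  case False then show ?thesis using assms by (simp add: max_def min_def)
qed

definition clmp :: "real \<Rightarrow> real \<Rightarrow> real \<Rightarrow> real" where
  "clmp a b x = max a (min b x)"

lemma clmp_in: "a \<le> b \<Longrightarrow> clmp a b x \<in> {a..b}" by (auto simp: clmp_def)
lemma clmp_cont: "continuous_on S (clmp a b)" unfolding clmp_def by (intro continuous_intros)

lemma Phi0_formula: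
  fixes v :: "real \<Rightarrow> 'v::euclidean_space"
  assumes cv: "continuous_on {a..b} v" and ab: "a \<le> b"
  shows "Phi 0 a b v x = integral {a..clmp a b x} v"
  unfolding Phi_restrict(2)[OF cv] clmp_def using integral_clmp[OF ab] by simp

lemma Phi1_formula:
  fixes v :: "real \<Rightarrow> 'v::euclidean_space"
  assumes cv: "continuous_on {a..b} v" and ab: "a \<le> b"
  shows "Phi 1 a b v x = x *\<^sub>R integral {a..clmp a b x} v - integral {a..clmp a b x} (\<lambda>s. s *\<^sub>R v s)"
proof -
  have c: "clmp a b x \<in> {a..b}" by (rule clmp_in[OF ab])
  have i1: "v integrable_on {a..clmp a b x}"
    using c by (intro integrable_continuous_interval continuous_on_subset[OF cv]) auto
  have i2: "(\<lambda>s. s *\<^sub>R v s) integrable_on {a..clmp a b x}"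
    using c by (intro integrable_continuous_interval continuous_intros continuous_on_subset[OF cv]) auto
  have "Phi 1 a b v x = integral {a..clmp a b x} (\<lambda>s. (x - s) *\<^sub>R v s)"
    unfolding Phi_restrict(2)[OF cv] clmp_def using integral_clmp[OF ab] by simp
  also have "\<dots> = integral {a..clmp a b x} (\<lambda>s. x *\<^sub>R v s - s *\<^sub>R v s)"
    by (simp add: scaleR_diff_left)
  also have "\<dots> = x *\<^sub>R integral {a..clmp a b x} v - integral {a..clmp a b x} (\<lambda>s. s *\<^sub>R v s)"
    using i1 i2 by (simp add: integral_diff integrable_cmul)
  finally show ?thesis .
qed


lemma I_deriv:
  fixes f :: "real \<Rightarrow> 'v::euclidean_space" and a b y :: real
  assumes "continuous_on {a..b} f" "a < y" "y < b"
  shows "((\<lambda>u. integral {a..u} f) has_vector_derivative f y) (at y)"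
  using integral_has_vector_derivative[OF assms(1), of y] assms(2,3) by (simp add: at_within_Icc_at)

lemma Phi0_fun:
  fixes v :: "real \<Rightarrow> 'v::euclidean_space"
  assumes cv: "continuous_on {a..b} v" and ab: "a \<le> b"
  shows "Phi 0 a b v = (\<lambda>x. integral {a..clmp a b x} v)"
  using Phi0_formula[OF cv ab] by (rule ext)

lemma Phi1_fun:
  fixes v :: "real \<Rightarrow> 'v::euclidean_space"
  assumes cv: "continuous_on {a..b} v" and ab: "a \<le> b"
  shows "Phi 1 a b v = (\<lambda>x. x *\<^sub>R integral {a..clmp a b x} v - integral {a..clmp a b x} (\<lambda>s. s *\<^sub>R v s))"
  using Phi1_formula[OF cv ab] by (rule ext)

lemma clmp_lo: "x \<le> a \<Longrightarrow> a \<le> b \<Longrightarrow> clmp a b x = a" by (simp add: clmp_def)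
lemma clmp_hi: "b \<le> x \<Longrightarrow> a \<le> b \<Longrightarrow> clmp a b x = b" by (simp add: clmp_def)
lemma clmp_mid: "a \<le> x \<Longrightarrow> x \<le> b \<Longrightarrow> clmp a b x = x" by (simp add: clmp_def)

lemma Phi0_deriv:
  fixes v :: "real \<Rightarrow> 'v::euclidean_space"
  assumes cv: "continuous_on {a..b} v" and ab: "a < b" and xa: "x \<noteq> a" and xb: "x \<noteq> b"
  shows "(Phi 0 a b v has_vector_derivative (if a < x \<and> x < b then v x else 0)) (at x)"
proof -
  have F: "Phi 0 a b v = (\<lambda>x. integral {a..clmp a b x} v)" using Phi0_fun[OF cv] ab by simp
  consider "x < a" | "a < x \<and> x < b" | "b < x" using xa xb by linarith
  then show ?thesis
  proof cases
    case 1
    have d: "((\<lambda>x. 0) has_vector_derivative (if a < x \<and> x < b then v x else 0)) (at x)" using 1 by simp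
    show ?thesis unfolding F
      by (rule has_vector_derivative_transform_within_open[OF d, of "{..<a}"])
         (use 1 ab in \<open>auto simp: clmp_lo integral_point\<close>)
  next
    case 2
    have d: "((\<lambda>u. integral {a..u} v) has_vector_derivative (if a < x \<and> x < b then v x else 0)) (at x)"
      using I_deriv[OF cv] 2 by auto
    show ?thesis unfolding F using 2
      by (intro has_vector_derivative_transform_within_open[OF d, of "{a<..<b}"])
         (auto simp: clmp_mid)
  next
    case 3
    have d: "((\<lambda>u. integral {a..b} v) has_vector_derivative (if a < x \<and> x < b then v x else 0)) (at x)" using 3 by simp
    show ?thesis unfolding F using 3 ab
      by (intro has_vector_derivative_transform_within_open[OF d, of "{b<..}"])
         (auto simp: clmp_hi)
  qed
qed

lemma Phi1_deriv:
  fixes v :: "real \<Rightarrow> 'v::euclidean_space"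
  assumes cv: "continuous_on {a..b} v" and ab: "a < b" and xa: "x \<noteq> a" and xb: "x \<noteq> b"
  shows "(Phi 1 a b v has_vector_derivative Phi 0 a b v x) (at x)"
proof -
  have F: "Phi 1 a b v = (\<lambda>x. x *\<^sub>R integral {a..clmp a b x} v - integral {a..clmp a b x} (\<lambda>s. s *\<^sub>R v s))"
    using Phi1_fun[OF cv] ab by simp
  have F0: "Phi 0 a b v x = integral {a..clmp a b x} v" using Phi0_formula[OF cv] ab by simp
  have cv1: "continuous_on {a..b} (\<lambda>s. s *\<^sub>R v s)" by (intro continuous_intros cv)
  consider "x < a" | "a < x \<and> x < b" | "b < x" using xa xb by linarith
  then show ?thesis
  proof cases
    case 1
    have d: "((\<lambda>x. 0) has_vector_derivative Phi 0 a b v x) (at x)"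
      using 1 ab by (simp add: F0 clmp_lo integral_point)
    show ?thesis unfolding F
      by (rule has_vector_derivative_transform_within_open[OF d, of "{..<a}"])
         (use 1 ab in \<open>auto simp: clmp_lo integral_point\<close>)
  next
    case 2
    have d0: "((\<lambda>u. integral {a..u} v) has_vector_derivative v x) (at x)"
      using I_deriv[OF cv] 2 by auto
    have d1: "((\<lambda>u. integral {a..u} (\<lambda>s. s *\<^sub>R v s)) has_vector_derivative x *\<^sub>R v x) (at x)"
      using I_deriv[OF cv1] 2 by auto
    have d: "((\<lambda>u. u *\<^sub>R integral {a..u} v - integral {a..u} (\<lambda>s. s *\<^sub>R v s)) has_vector_derivative
              (x *\<^sub>R v x + 1 *\<^sub>R integral {a..x} v) - x *\<^sub>R v x) (at x)"
      by (intro has_vector_derivative_diff has_vector_derivative_scaleR d0 d1) (auto intro!: derivative_eq_intros)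
    have e: "(x *\<^sub>R v x + 1 *\<^sub>R integral {a..x} v) - x *\<^sub>R v x = Phi 0 a b v x"
      using 2 by (simp add: F0 clmp_mid)
    show ?thesis unfolding F using 2
      by (intro has_vector_derivative_transform_within_open[OF d[unfolded e], of "{a<..<b}"])
         (auto simp: clmp_mid)
  next
    case 3
    have d: "((\<lambda>u. u *\<^sub>R integral {a..b} v - integral {a..b} (\<lambda>s. s *\<^sub>R v s)) has_vector_derivative
              1 *\<^sub>R integral {a..b} v) (at x)"
      by (auto intro!: derivative_eq_intros)
    have e: "1 *\<^sub>R integral {a..b} v = Phi 0 a b v x" using 3 ab by (simp add: F0 clmp_hi)
    show ?thesis unfolding F using 3 ab
      by (intro has_vector_derivative_transform_within_open[OF d[unfolded e], of "{b<..}"])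
         (auto simp: clmp_hi)
  qed
qed

lemma Phi_deriv_ge2:
  fixes v :: "real \<Rightarrow> 'v::euclidean_space"
  assumes cv: "continuous_on {a..b} v" and j: "j \<ge> 2"
  shows "(Phi j a b v has_vector_derivative Phi (j - 1) a b v x) (at x)"
proof -
  have j1: "j \<ge> 1" "j - 1 \<ge> 1" using j by auto
  have "((\<lambda>x. integral (cbox a b) (\<lambda>s. pp j (x - s) *\<^sub>R v s)) has_vector_derivative
          integral (cbox a b) (\<lambda>s. pp (j - 1) (x - s) *\<^sub>R v s)) (at x within UNIV)"
  proof (rule leibniz_rule_vector_derivative)
    fix x s :: real
    have "((\<lambda>x. pp j (x - s)) has_field_derivative pp (j - 1) (x - s) * 1) (at x within UNIV)"
      by (rule DERIV_chain2[OF pp_deriv]) (use j in \<open>auto intro!: derivative_eq_intros\<close>)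
    then show "((\<lambda>x. pp j (x - s) *\<^sub>R v s) has_vector_derivative pp (j - 1) (x - s) *\<^sub>R v s) (at x within UNIV)"
      using has_vector_derivative_scaleR[OF _ has_vector_derivative_const[of "v s"]] by fastforce
  next
    fix x :: real
    show "(\<lambda>s. pp j (x - s) *\<^sub>R v s) integrable_on cbox a b"
      using Phi_restrict(1)[OF cv] by (simp add: cbox_interval)
  next
    have c1: "continuous_on (UNIV \<times> cbox a b) (\<lambda>p. pp (j - 1) (fst p - snd p))"
      by (rule continuous_on_compose2[OF pp_cont[OF j1(2)]]) (auto intro!: continuous_intros)
    have c2: "continuous_on (UNIV \<times> cbox a b) (\<lambda>p. v (snd p))"
      by (rule continuous_on_compose2[OF cv]) (auto intro!: continuous_intros simp: cbox_interval)
    have "continuous_on (UNIV \<times> cbox a b) (\<lambda>p. pp (j - 1) (fst p - snd p) *\<^sub>R v (snd p))"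
      by (rule continuous_on_scaleR[OF c1 c2])
    then show "continuous_on (UNIV \<times> cbox a b) (\<lambda>(x, s). pp (j - 1) (x - s) *\<^sub>R v s)"
      by (simp add: case_prod_beta)
  qed auto
  then show ?thesis unfolding Phi_def by (simp add: cbox_interval)
qed

lemma Phi_cont:
  fixes v :: "real \<Rightarrow> 'v::euclidean_space"
  assumes cv: "continuous_on {a..b} v" and ab: "a \<le> b"
  shows "continuous_on S (Phi j a b v)"
proof -
  have cv1: "continuous_on {a..b} (\<lambda>s. s *\<^sub>R v s)" by (intro continuous_intros cv)
  have I0: "continuous_on S (\<lambda>x. integral {a..clmp a b x} v)"
    by (rule continuous_on_compose2[OF indefinite_integral_continuous_1 clmp_cont])
       (auto intro: integrable_continuous_interval cv clmp_in[OF ab])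
  have I1: "continuous_on S (\<lambda>x. integral {a..clmp a b x} (\<lambda>s. s *\<^sub>R v s))"
    by (rule continuous_on_compose2[OF indefinite_integral_continuous_1 clmp_cont])
       (auto intro: integrable_continuous_interval cv1 clmp_in[OF ab])
  consider "j = 0" | "j = 1" | "j \<ge> 2" by linarith
  then show ?thesis
  proof cases
    case 1 then show ?thesis using I0 by (simp add: Phi0_fun[OF cv ab])
  next
    case 2
    have "continuous_on S (\<lambda>x. x *\<^sub>R integral {a..clmp a b x} v - integral {a..clmp a b x} (\<lambda>s. s *\<^sub>R v s))"
      by (intro continuous_intros I0 I1)
    then show ?thesis using 2 Phi1_fun[OF cv ab] by simp
  next
    case 3
    show ?thesis
      by (rule continuous_at_imp_continuous_on)
         (meson has_vector_derivative_continuous Phi_deriv_ge2[OF cv 3])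
  qed
qed


(* ---- p1/P7.thy ---- *)


lemma delay_expand:
  fixes B :: "complex^'n::finite^'n"
  assumes tau: "\<tau> > 0" and r: "r \<le> real M * \<tau>"
  shows "delay_exp \<tau> B r = (\<Sum>j\<le>M. pp j (r - (real j - 1) * \<tau>) *\<^sub>R mpow B j)"
proof -
  consider "r < -\<tau>" | "-\<tau> \<le> r \<and> r \<le> 0" | "r > 0" by linarith
  then show ?thesis
  proof cases
    case 1
    have "pp j (r - (real j - 1) * \<tau>) = 0" for j
    proof -
      have "(real j - 1) * \<tau> \<ge> -\<tau>" using tau by (simp add: algebra_simps)
      then show ?thesis using 1 by (simp add: pp_def)
    qed
    then show ?thesis using 1 by (simp add: delay_exp_def)
  next
    case 2
    have z: "pp j (r - (real j - 1) * \<tau>) = 0" if "j \<ge> 1" for j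
    proof -
      have "(real j - 1) * \<tau> \<ge> 0" using tau that by simp
      then have "r - (real j - 1) * \<tau> \<le> 0" using 2 by simp
      then show ?thesis using that by (cases "r - (real j - 1) * \<tau> = 0") (auto simp: pp_def)
    qed
    have "(\<Sum>j\<le>M. pp j (r - (real j - 1) * \<tau>) *\<^sub>R mpow B j) = pp 0 (r + \<tau>) *\<^sub>R mpow B 0"
    proof -
      have "(\<Sum>j\<le>M. pp j (r - (real j - 1) * \<tau>) *\<^sub>R mpow B j) = (\<Sum>j\<in>{0}. pp j (r - (real j - 1) * \<tau>) *\<^sub>R mpow B j)"
        by (rule sum.mono_neutral_right) (auto simp: z)
      then show ?thesis by simp
    qed
    also have "\<dots> = mat 1" using 2 by (simp add: pp_def)
    finally show ?thesis using 2 by (simp add: delay_exp_def)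
  next
    case 3
    define K where "K = nat \<lceil>r / \<tau>\<rceil>"
    have c1: "r / \<tau> \<le> real K" and c2: "real K < r / \<tau> + 1"
      using ceiling_correct[of "r / \<tau>"] 3 tau unfolding K_def by auto
    have KM: "K \<le> M"
    proof -
      have "r / \<tau> \<le> real M" using r tau by (simp add: pos_divide_le_eq)
      then show ?thesis unfolding K_def by (simp add: ceiling_le_iff nat_le_iff)
    qed
    have K1: "real K * \<tau> \<ge> r" using c1 tau by (simp add: pos_divide_le_eq)
    have "real K - 1 < r / \<tau>" using c2 by simp
    then have K2: "(real K - 1) * \<tau> < r" using tau by (simp add: pos_less_divide_eq)
    have "(\<Sum>j\<le>M. pp j (r - (real j - 1) * \<tau>) *\<^sub>R mpow B j) = (\<Sum>j\<le>K. pp j (r - (real j - 1) * \<tau>) *\<^sub>R mpow B j)"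
    proof (rule sum.mono_neutral_right)
      show "\<forall>i\<in>{..M} - {..K}. pp i (r - (real i - 1) * \<tau>) *\<^sub>R mpow B i = 0"
      proof
        fix i assume i: "i \<in> {..M} - {..K}"
        then have "real i - 1 \<ge> real K" by auto
        then have "(real i - 1) * \<tau> \<ge> real K * \<tau>" using tau by (simp add: mult_right_mono)
        then have le: "r - (real i - 1) * \<tau> \<le> 0" using K1 by simp
        have "i \<ge> 1" using i by auto
        then show "pp i (r - (real i - 1) * \<tau>) *\<^sub>R mpow B i = 0"
          using le by (cases "r - (real i - 1) * \<tau> = 0") (auto simp: pp_def)
      qed
    qed (use KM in auto)
    also have "\<dots> = (\<Sum>j\<le>K. ((r - (real j - 1) * \<tau>) ^ j / fact j) *\<^sub>R mpow B j)"
    proof (rule sum.cong)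
      fix j assume "j \<in> {..K}"
      then have "(real j - 1) * \<tau> \<le> (real K - 1) * \<tau>" using tau by (simp add: mult_right_mono)
      then have "r - (real j - 1) * \<tau> > 0" using K2 by simp
      then show "pp j (r - (real j - 1) * \<tau>) *\<^sub>R mpow B j = ((r - (real j - 1) * \<tau>) ^ j / fact j) *\<^sub>R mpow B j"
        by (simp add: pp_def)
    qed simp
    finally show ?thesis using 3 tau by (simp add: delay_exp_def K_def)
  qed
qed


lemma sum_mv_left: "(\<Sum>j\<in>S. M j) *v (v::complex^'n) = (\<Sum>j\<in>S. M j *v v)"
proof (induction S rule: infinite_finite_induct)
  case (insert x F) then show ?case by (simp add: matrix_vector_mult_add_rdistrib)
qed auto

lemma int_mv:
  fixes f :: "real \<Rightarrow> complex^'n::finite" and M :: "complex^'n^'n"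
  assumes "f integrable_on S"
  shows "integral S (\<lambda>s. M *v f s) = M *v integral S f"
    and "(\<lambda>s. M *v f s) integrable_on S"
proof -
  have bl: "bounded_linear ((*v) M)" by simp
  show "integral S (\<lambda>s. M *v f s) = M *v integral S f"
    using integral_linear[OF assms bl] by (simp add: o_def)
  show "(\<lambda>s. M *v f s) integrable_on S"
    using integrable_linear[OF assms bl] by (simp add: o_def)
qed

lemma mv_scaleR_comm: "(c::real) *\<^sub>R (M *v (v::complex^'n)) = M *v (c *\<^sub>R v)"
  by (simp add: vec_eq_iff matrix_vector_mult_def scaleR_sum_right)

definition Yf :: "real \<Rightarrow> complex^'n^'n \<Rightarrow> (real \<Rightarrow> complex^'n) \<Rightarrow> (real \<Rightarrow> complex^'n) \<Rightarrow> real \<Rightarrow> complex^'n" where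
  "Yf \<tau> B \<psi> w t = delay_exp \<tau> B (t - \<tau>) *v \<psi> 0
     + integral {-\<tau>..0} (\<lambda>s. (delay_exp \<tau> B (t - 2 * \<tau> - s) ** B) *v \<psi> s)
     + integral {0..t} (\<lambda>s. delay_exp \<tau> B (t - \<tau> - s) *v w s)"

definition Tf :: "real \<Rightarrow> complex^'n^'n \<Rightarrow> (real \<Rightarrow> complex^'n) \<Rightarrow> (real \<Rightarrow> complex^'n) \<Rightarrow> nat \<Rightarrow> real \<Rightarrow> complex^'n" where
  "Tf \<tau> B \<psi> w j t = pp j (t - real j * \<tau>) *\<^sub>R \<psi> 0
     + Phi j (-\<tau>) 0 (\<lambda>s. B *v \<psi> s) (t - (real j + 1) * \<tau>)
     + integral {0..t} (\<lambda>s. pp j (t - real j * \<tau> - s) *\<^sub>R w s)"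

lemma Y_repr:
  fixes B :: "complex^'n::finite^'n" and \<psi> w :: "real \<Rightarrow> complex^'n"
  assumes tau: "\<tau> > 0" and c\<psi>: "continuous_on UNIV \<psi>" and cw: "continuous_on UNIV w"
    and tM: "t \<le> real M * \<tau>"
  shows "Yf \<tau> B \<psi> w t = (\<Sum>j\<le>M. mpow B j *v Tf \<tau> B \<psi> w j t)"
proof -
  let ?D = "delay_exp \<tau> B"
  have cb: "continuous_on S (\<lambda>s. B *v \<psi> s)" for S
    by (rule bounded_linear.continuous_on[OF matrix_vector_mul_bounded_linear continuous_on_subset[OF c\<psi>]]) auto
  have cw': "continuous_on S w" for S using cw by (rule continuous_on_subset) auto
  \<comment> \<open>first term\<close>
  have t1: "?D (t - \<tau>) *v \<psi> 0 = (\<Sum>j\<le>M. mpow B j *v (pp j (t - real j * \<tau>) *\<^sub>R \<psi> 0))"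
  proof -
    have "?D (t - \<tau>) = (\<Sum>j\<le>M. pp j (t - \<tau> - (real j - 1) * \<tau>) *\<^sub>R mpow B j)"
      by (rule delay_expand[OF tau]) (use tM tau in auto)
    then show ?thesis
      by (simp add: sum_mv_left smul_mv mv_scaleR_comm algebra_simps)
  qed
  \<comment> \<open>second term\<close>
  have t2: "integral {-\<tau>..0} (\<lambda>s. (?D (t - 2 * \<tau> - s) ** B) *v \<psi> s)
      = (\<Sum>j\<le>M. mpow B j *v Phi j (-\<tau>) 0 (\<lambda>s. B *v \<psi> s) (t - (real j + 1) * \<tau>))"
  proof -
    have "integral {-\<tau>..0} (\<lambda>s. (?D (t - 2 * \<tau> - s) ** B) *v \<psi> s)
        = integral {-\<tau>..0} (\<lambda>s. \<Sum>j\<le>M. mpow B j *v (pp j ((t - (real j + 1) * \<tau>) - s) *\<^sub>R (B *v \<psi> s)))"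
    proof (rule integral_cong)
      fix s assume s: "s \<in> {-\<tau>..0}"
      have "?D (t - 2 * \<tau> - s) = (\<Sum>j\<le>M. pp j (t - 2 * \<tau> - s - (real j - 1) * \<tau>) *\<^sub>R mpow B j)"
        by (rule delay_expand[OF tau]) (use tM tau s in auto)
      then show "(?D (t - 2 * \<tau> - s) ** B) *v \<psi> s = (\<Sum>j\<le>M. mpow B j *v (pp j ((t - (real j + 1) * \<tau>) - s) *\<^sub>R (B *v \<psi> s)))"
        by (simp add: sum_mv_left smul_mv mv_scaleR_comm matrix_vector_mul_assoc[symmetric] algebra_simps)
    qed
    also have "\<dots> = (\<Sum>j\<le>M. integral {-\<tau>..0} (\<lambda>s. mpow B j *v (pp j ((t - (real j + 1) * \<tau>) - s) *\<^sub>R (B *v \<psi> s))))"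
      by (rule integral_sum) (auto intro!: int_mv(2) Phi_restrict(1)[OF cb])
    also have "\<dots> = (\<Sum>j\<le>M. mpow B j *v Phi j (-\<tau>) 0 (\<lambda>s. B *v \<psi> s) (t - (real j + 1) * \<tau>))"
      by (rule sum.cong) (auto simp: int_mv(1)[OF Phi_restrict(1)[OF cb]] Phi_def)
    finally show ?thesis .
  qed
  \<comment> \<open>third term\<close>
  have t3: "integral {0..t} (\<lambda>s. ?D (t - \<tau> - s) *v w s)
      = (\<Sum>j\<le>M. mpow B j *v integral {0..t} (\<lambda>s. pp j (t - real j * \<tau> - s) *\<^sub>R w s))"
  proof -
    have "integral {0..t} (\<lambda>s. ?D (t - \<tau> - s) *v w s)
        = integral {0..t} (\<lambda>s. \<Sum>j\<le>M. mpow B j *v (pp j ((t - real j * \<tau>) - s) *\<^sub>R w s))"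
    proof (rule integral_cong)
      fix s assume s: "s \<in> {0..t}"
      have "?D (t - \<tau> - s) = (\<Sum>j\<le>M. pp j (t - \<tau> - s - (real j - 1) * \<tau>) *\<^sub>R mpow B j)"
        by (rule delay_expand[OF tau]) (use tM tau s in auto)
      then show "?D (t - \<tau> - s) *v w s = (\<Sum>j\<le>M. mpow B j *v (pp j ((t - real j * \<tau>) - s) *\<^sub>R w s))"
        by (simp add: sum_mv_left smul_mv mv_scaleR_comm algebra_simps)
    qed
    also have "\<dots> = (\<Sum>j\<le>M. integral {0..t} (\<lambda>s. mpow B j *v (pp j ((t - real j * \<tau>) - s) *\<^sub>R w s)))"
      by (rule integral_sum) (auto intro!: int_mv(2) Phi_restrict(1)[OF cw'])
    also have "\<dots> = (\<Sum>j\<le>M. mpow B j *v integral {0..t} (\<lambda>s. pp j (t - real j * \<tau> - s) *\<^sub>R w s))"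
      by (rule sum.cong) (auto simp: int_mv(1)[OF Phi_restrict(1)[OF cw']])
    finally show ?thesis .
  qed
  show ?thesis
    unfolding Yf_def Tf_def t1 t2 t3
    by (simp add: sum.distrib[symmetric] matrix_vector_right_distrib)
qed


lemma third_eq:
  fixes w :: "real \<Rightarrow> 'v::euclidean_space"
  assumes cw: "continuous_on UNIV w" and tT: "t \<le> T'" and c: "0 \<le> c"
  shows "integral {0..t} (\<lambda>s. pp j (t - c - s) *\<^sub>R w s) = Phi j 0 T' w (t - c)"
proof -
  have cw': "continuous_on S w" for S using cw by (rule continuous_on_subset) auto
  have "integral {0..t} (\<lambda>s. pp j (t - c - s) *\<^sub>R w s) = Phi j 0 t w (t - c)"
    by (simp add: Phi_def)
  also have "\<dots> = integral {0..t - c} (\<lambda>s. ((t - c - s) ^ j / fact j) *\<^sub>R w s)"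
  proof -
    have "min t (t - c) = t - c" using c by simp
    then show ?thesis using Phi_restrict(2)[OF cw', where a=0 and b=t and j=j and x="t - c"] by simp
  qed
  also have "\<dots> = Phi j 0 T' w (t - c)"
  proof -
    have "min T' (t - c) = t - c" using c tT by simp
    then show ?thesis using Phi_restrict(2)[OF cw', where a=0 and b=T' and j=j and x="t - c"] by simp
  qed
  finally show ?thesis .
qed

lemma shift_deriv:
  "(F has_vector_derivative F') (at (t - c)) \<Longrightarrow> ((\<lambda>t. F (t - c)) has_vector_derivative F') (at t)"
proof -
  assume d: "(F has_vector_derivative F') (at (t - c))"
  have "(F \<circ> (\<lambda>t. t - c) has_vector_derivative 1 *\<^sub>R F') (at t)"
    by (rule vector_diff_chain_at) (auto intro!: derivative_eq_intros d)
  then show ?thesis by (simp add: o_def)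
qed

lemma Phi_deriv_any:
  fixes v :: "real \<Rightarrow> 'v::euclidean_space"
  assumes cv: "continuous_on {a..b} v" and ab: "a < b" and j: "j \<ge> 1" and x: "j = 1 \<longrightarrow> x \<noteq> a \<and> x \<noteq> b"
  shows "(Phi j a b v has_vector_derivative Phi (j - 1) a b v x) (at x)"
proof (cases "j = 1")
  case True then show ?thesis using Phi1_deriv[OF cv ab] x by simp
next
  case False then show ?thesis using Phi_deriv_ge2[OF cv] j by simp
qed

lemma pp_vderiv:
  assumes "j \<ge> 1" "j = 1 \<longrightarrow> t - c \<noteq> 0"
  shows "((\<lambda>t. pp j (t - c) *\<^sub>R v) has_vector_derivative pp (j - 1) (t - c) *\<^sub>R v) (at t)"
proof -
  have "((\<lambda>t. pp j (t - c)) has_field_derivative pp (j - 1) (t - c) * 1) (at t)"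
    by (rule DERIV_chain2[OF pp_deriv]) (use assms in \<open>auto intro!: derivative_eq_intros\<close>)
  then show ?thesis
    using has_vector_derivative_scaleR[OF _ has_vector_derivative_const[of v]] by fastforce
qed

lemma pp0_vderiv:
  assumes "t - c \<noteq> 0"
  shows "((\<lambda>t. pp 0 (t - c) *\<^sub>R v) has_vector_derivative 0) (at t)"
proof -
  have "((\<lambda>t. pp 0 (t - c)) has_field_derivative 0 * 1) (at t)"
    by (rule DERIV_chain2[OF pp0_deriv]) (use assms in \<open>auto intro!: derivative_eq_intros\<close>)
  then show ?thesis
    using has_vector_derivative_scaleR[OF _ has_vector_derivative_const[of v]] by fastforce
qed

lemma T_deriv:
  fixes B :: "complex^'n::finite^'n" and \<psi> w :: "real \<Rightarrow> complex^'n"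
  assumes tau: "\<tau> > 0" and c\<psi>: "continuous_on UNIV \<psi>" and cw: "continuous_on UNIV w"
    and t: "0 < t" "t < T'" and nm: "\<forall>m::nat. t \<noteq> real m * \<tau>"
  shows "(Tf \<tau> B \<psi> w j has_vector_derivative
           (if j = 0 then (if t < \<tau> then B *v \<psi> (t - \<tau>) else 0) + w t else Tf \<tau> B \<psi> w (j - 1) (t - \<tau>))) (at t)"
proof -
  let ?b = "\<lambda>s. B *v \<psi> s"
  have cb: "continuous_on S ?b" for S
    by (rule bounded_linear.continuous_on[OF matrix_vector_mul_bounded_linear continuous_on_subset[OF c\<psi>]]) auto
  have cw': "continuous_on S w" for S using cw by (rule continuous_on_subset) auto
  have tt: "t \<noteq> \<tau>" "t \<noteq> 2 * \<tau>" "t \<noteq> 0"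
    using nm[rule_format, of 1] nm[rule_format, of 2] nm[rule_format, of 0] by auto
  have T'pos: "0 < T'" using t by simp
  define F where "F = (\<lambda>t'. pp j (t' - real j * \<tau>) *\<^sub>R \<psi> 0 + Phi j (-\<tau>) 0 ?b (t' - (real j + 1) * \<tau>)
                          + Phi j 0 T' w (t' - real j * \<tau>))"
  have FT: "F t' = Tf \<tau> B \<psi> w j t'" if "t' \<in> {..<T'}" for t'
    unfolding F_def Tf_def using third_eq[OF cw, of t' T' "real j * \<tau>" j] that tau by simp
  show ?thesis
  proof (cases "j = 0")
    case True
    have dA: "((\<lambda>t'. pp 0 (t' - 0) *\<^sub>R \<psi> 0) has_vector_derivative 0) (at t)"
      by (rule pp0_vderiv) (use tt in auto)
    have dB: "((\<lambda>t'. Phi 0 (-\<tau>) 0 ?b (t' - \<tau>)) has_vector_derivative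
               (if -\<tau> < t - \<tau> \<and> t - \<tau> < 0 then ?b (t - \<tau>) else 0)) (at t)"
      by (rule shift_deriv, rule Phi0_deriv[OF cb]) (use tau tt in auto)
    have dC: "((\<lambda>t'. Phi 0 0 T' w (t' - 0)) has_vector_derivative
               (if 0 < t - 0 \<and> t - 0 < T' then w (t - 0) else 0)) (at t)"
      by (rule shift_deriv, rule Phi0_deriv[OF cw']) (use T'pos t in auto)
    have d: "(F has_vector_derivative 0 + (if -\<tau> < t - \<tau> \<and> t - \<tau> < 0 then ?b (t - \<tau>) else 0)
                + (if 0 < t - 0 \<and> t - 0 < T' then w (t - 0) else 0)) (at t)"
      unfolding F_def True using has_vector_derivative_add[OF has_vector_derivative_add[OF dA dB] dC] by simp
    have e: "0 + (if -\<tau> < t - \<tau> \<and> t - \<tau> < 0 then ?b (t - \<tau>) else 0)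
                + (if 0 < t - 0 \<and> t - 0 < T' then w (t - 0) else 0)
           = (if j = 0 then (if t < \<tau> then B *v \<psi> (t - \<tau>) else 0) + w t else Tf \<tau> B \<psi> w (j - 1) (t - \<tau>))"
      using True t by auto
    show ?thesis
      by (rule has_vector_derivative_transform_within_open[OF d[unfolded e], of "{..<T'}"])
         (use t FT in auto)
  next
    case False
    then have j1: "j \<ge> 1" by simp
    have dA: "((\<lambda>t'. pp j (t' - real j * \<tau>) *\<^sub>R \<psi> 0) has_vector_derivative pp (j - 1) (t - real j * \<tau>) *\<^sub>R \<psi> 0) (at t)"
      by (rule pp_vderiv[OF j1]) (use tt in auto)
    have dB: "((\<lambda>t'. Phi j (-\<tau>) 0 ?b (t' - (real j + 1) * \<tau>)) has_vector_derivative
               Phi (j - 1) (-\<tau>) 0 ?b (t - (real j + 1) * \<tau>)) (at t)"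
      by (rule shift_deriv, rule Phi_deriv_any[OF cb _ j1]) (use tau tt in \<open>auto simp: algebra_simps\<close>)
    have dC: "((\<lambda>t'. Phi j 0 T' w (t' - real j * \<tau>)) has_vector_derivative
               Phi (j - 1) 0 T' w (t - real j * \<tau>)) (at t)"
      by (rule shift_deriv, rule Phi_deriv_any[OF cw' _ j1]) (use T'pos t tt tau in \<open>auto simp: algebra_simps\<close>)
    have d: "(F has_vector_derivative pp (j - 1) (t - real j * \<tau>) *\<^sub>R \<psi> 0 + Phi (j - 1) (-\<tau>) 0 ?b (t - (real j + 1) * \<tau>)
                + Phi (j - 1) 0 T' w (t - real j * \<tau>)) (at t)"
      unfolding F_def by (rule has_vector_derivative_add[OF has_vector_derivative_add[OF dA dB] dC])
    have rj: "real (j - 1) = real j - 1" using j1 by simp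
    have e: "pp (j - 1) (t - real j * \<tau>) *\<^sub>R \<psi> 0 + Phi (j - 1) (-\<tau>) 0 ?b (t - (real j + 1) * \<tau>)
                + Phi (j - 1) 0 T' w (t - real j * \<tau>)
           = (if j = 0 then (if t < \<tau> then B *v \<psi> (t - \<tau>) else 0) + w t else Tf \<tau> B \<psi> w (j - 1) (t - \<tau>))"
    proof -
      have "integral {0..t - \<tau>} (\<lambda>s. pp (j - 1) (t - \<tau> - real (j - 1) * \<tau> - s) *\<^sub>R w s)
            = Phi (j - 1) 0 T' w (t - \<tau> - real (j - 1) * \<tau>)"
        by (rule third_eq[OF cw]) (use t tau in auto)
      then show ?thesis using False unfolding Tf_def rj by (simp add: algebra_simps)
    qed
    show ?thesis
      by (rule has_vector_derivative_transform_within_open[OF d[unfolded e], of "{..<T'}"])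
         (use t FT in auto)
  qed
qed


lemma exists_M: "\<tau> > 0 \<Longrightarrow> \<exists>M::nat. T \<le> real M * \<tau>"
proof -
  assume tau: "\<tau> > 0"
  obtain M :: nat where "T / \<tau> \<le> real M" using real_arch_simple by blast
  then have "T \<le> real M * \<tau>" using tau by (simp add: pos_divide_le_eq)
  then show ?thesis by blast
qed

lemma Y_deriv:
  fixes B :: "complex^'n::finite^'n" and \<psi> w :: "real \<Rightarrow> complex^'n"
  assumes tau: "\<tau> > 0" and c\<psi>: "continuous_on UNIV \<psi>" and cw: "continuous_on UNIV w"
    and t: "0 < t" and nm: "\<forall>m::nat. t \<noteq> real m * \<tau>"
  shows "(Yf \<tau> B \<psi> w has_vector_derivative
           (if t < \<tau> then B *v \<psi> (t - \<tau>) else 0) + w t + B *v Yf \<tau> B \<psi> w (t - \<tau>)) (at t)"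
proof -
  define T' where "T' = t + 1"
  obtain M' :: nat where M': "T' \<le> real M' * \<tau>" using exists_M[OF tau] by blast
  define M where "M = Suc M'"
  have rep: "Yf \<tau> B \<psi> w t' = (\<Sum>j\<le>M. mpow B j *v Tf \<tau> B \<psi> w j t')" if "t' \<in> {..<T'}" for t'
  proof (rule Y_repr[OF tau c\<psi> cw])
    show "t' \<le> real M * \<tau>" using that M' tau unfolding M_def by (simp add: algebra_simps)
  qed
  define d where "d = (\<lambda>j. if j = 0 then (if t < \<tau> then B *v \<psi> (t - \<tau>) else 0) + w t else Tf \<tau> B \<psi> w (j - 1) (t - \<tau>))"
  have dT: "(Tf \<tau> B \<psi> w j has_vector_derivative d j) (at t)" for j
    unfolding d_def by (rule T_deriv[OF tau c\<psi> cw t _ nm, where T'=T']) (simp add: T'_def)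
  have ds: "((\<lambda>t'. \<Sum>j\<le>M. mpow B j *v Tf \<tau> B \<psi> w j t') has_vector_derivative (\<Sum>j\<le>M. mpow B j *v d j)) (at t)"
    by (intro has_vector_derivative_sum bounded_linear.has_vector_derivative[OF matrix_vector_mul_bounded_linear dT])
  have e: "(\<Sum>j\<le>M. mpow B j *v d j) = (if t < \<tau> then B *v \<psi> (t - \<tau>) else 0) + w t + B *v Yf \<tau> B \<psi> w (t - \<tau>)"
  proof -
    have "(\<Sum>j\<le>M. mpow B j *v d j) = mpow B 0 *v d 0 + (\<Sum>j\<le>M'. mpow B (Suc j) *v d (Suc j))"
      unfolding M_def by (rule sum.atMost_Suc_shift)
    also have "(\<Sum>j\<le>M'. mpow B (Suc j) *v d (Suc j)) = B *v (\<Sum>j\<le>M'. mpow B j *v Tf \<tau> B \<psi> w j (t - \<tau>))"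
      by (simp add: d_def vec.sum mpow_Suc matrix_vector_mul_assoc)
    also have "(\<Sum>j\<le>M'. mpow B j *v Tf \<tau> B \<psi> w j (t - \<tau>)) = Yf \<tau> B \<psi> w (t - \<tau>)"
      by (rule Y_repr[OF tau c\<psi> cw, symmetric]) (use M' tau in \<open>simp add: T'_def\<close>)
    finally show ?thesis by (simp add: d_def)
  qed
  show ?thesis
    by (rule has_vector_derivative_transform_within_open[OF ds[unfolded e], of "{..<T'}"])
       (use rep in \<open>auto simp: T'_def\<close>)
qed

lemma Y_neg:
  assumes tau: "\<tau> > 0" and r: "r < 0"
  shows "Yf \<tau> B \<psi> w r = 0"
proof -
  have "delay_exp \<tau> B (r - \<tau>) = 0" using r tau by (simp add: delay_exp_def)
  moreover have "integral {-\<tau>..0} (\<lambda>s. (delay_exp \<tau> B (r - 2 * \<tau> - s) ** B) *v \<psi> s) = 0"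
  proof -
    have "integral {-\<tau>..0} (\<lambda>s. (delay_exp \<tau> B (r - 2 * \<tau> - s) ** B) *v \<psi> s) = integral {-\<tau>..0} (\<lambda>s. 0)"
      by (rule integral_cong) (use r tau in \<open>auto simp: delay_exp_def\<close>)
    then show ?thesis by simp
  qed
  moreover have "{0..r} = {}" using r by simp
  ultimately show ?thesis by (simp add: Yf_def)
qed

lemma Y_zero:
  assumes tau: "\<tau> > 0"
  shows "Yf \<tau> B \<psi> w 0 = \<psi> 0"
proof -
  have "delay_exp \<tau> B (0 - \<tau>) = mat 1" using tau by (simp add: delay_exp_def)
  moreover have "integral {-\<tau>..0} (\<lambda>s. (delay_exp \<tau> B (0 - 2 * \<tau> - s) ** B) *v \<psi> s) = 0"
  proof -
    have "integral {-\<tau>..0} (\<lambda>s. (delay_exp \<tau> B (0 - 2 * \<tau> - s) ** B) *v \<psi> s) = integral {-\<tau>..0} (\<lambda>s. 0)"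
      by (rule integral_spike[of "{-\<tau>}"]) (use tau in \<open>auto simp: delay_exp_def\<close>)
    then show ?thesis by simp
  qed
  ultimately show ?thesis by (simp add: Yf_def integral_point)
qed

lemma Y_cont:
  fixes B :: "complex^'n::finite^'n" and \<psi> w :: "real \<Rightarrow> complex^'n"
  assumes tau: "\<tau> > 0" and c\<psi>: "continuous_on UNIV \<psi>" and cw: "continuous_on UNIV w" and T': "0 \<le> T'"
  shows "continuous_on {0..T'} (Yf \<tau> B \<psi> w)"
proof -
  obtain M :: nat where M: "T' \<le> real M * \<tau>" using exists_M[OF tau] by blast
  let ?b = "\<lambda>s. B *v \<psi> s"
  have cb: "continuous_on S ?b" for S
    by (rule bounded_linear.continuous_on[OF matrix_vector_mul_bounded_linear continuous_on_subset[OF c\<psi>]]) auto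
  have cw': "continuous_on S w" for S using cw by (rule continuous_on_subset) auto
  have cT: "continuous_on {0..T'} (Tf \<tau> B \<psi> w j)" for j
  proof -
    have c1: "continuous_on {0..T'} (\<lambda>t. pp j (t - real j * \<tau>) *\<^sub>R \<psi> 0)"
    proof (cases "j = 0")
      case True
      have "continuous_on {0..T'} (\<lambda>t. \<psi> 0)" by simp
      then show ?thesis by (rule continuous_on_eq) (use True in \<open>auto simp: pp_def\<close>)
    next
      case False
      then show ?thesis
        by (intro continuous_intros continuous_on_compose2[OF pp_cont[of j UNIV]]) auto
    qed
    have c2: "continuous_on {0..T'} (\<lambda>t. Phi j (-\<tau>) 0 ?b (t - (real j + 1) * \<tau>))"
      by (rule continuous_on_compose2[OF Phi_cont[OF cb, of "-\<tau>" 0 UNIV j]]) (use tau in \<open>auto intro!: continuous_intros\<close>)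
    have c3': "continuous_on {0..T'} (\<lambda>t. Phi j 0 T' w (t - real j * \<tau>))"
      by (rule continuous_on_compose2[OF Phi_cont[OF cw' T', of UNIV j]]) (auto intro!: continuous_intros)
    have c3: "continuous_on {0..T'} (\<lambda>t. integral {0..t} (\<lambda>s. pp j (t - real j * \<tau> - s) *\<^sub>R w s))"
      by (rule continuous_on_eq[OF c3']) (use third_eq[OF cw] tau in auto)
    show ?thesis unfolding Tf_def by (intro continuous_on_add c1 c2 c3)
  qed
  have "continuous_on {0..T'} (\<lambda>t. \<Sum>j\<le>M. mpow B j *v Tf \<tau> B \<psi> w j t)"
    by (intro continuous_on_sum bounded_linear.continuous_on[OF matrix_vector_mul_bounded_linear cT])
  then show ?thesis
  proof (rule continuous_on_eq)
    fix x assume "x \<in> {0..T'}"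
    then have "x \<le> real M * \<tau>" using M by auto
    then show "(\<Sum>j\<le>M. mpow B j *v Tf \<tau> B \<psi> w j x) = Yf \<tau> B \<psi> w x"
      using Y_repr[OF tau c\<psi> cw] by simp
  qed
qed



(* ---- p1/P8.thy ---- *)


lemma const_interval:
  fixes d :: "real \<Rightarrow> 'v::real_normed_vector"
  assumes cd: "continuous_on {a..b} d" and ab: "a < b"
    and dd: "\<And>t. t \<in> {a<..<b} \<Longrightarrow> (d has_vector_derivative 0) (at t)"
  shows "\<forall>t\<in>{a..b}. d t = d a"
proof -
  have conv: "convex {a<..<b}" by (rule convex_real_interval)
  have d': "(d has_vector_derivative 0) (at t within {a<..<b})" if t: "t \<in> {a<..<b}" for t
  proof -
    have "at t within {a<..<b} = at t" by (rule at_within_open[OF t]) simp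
    then show ?thesis using dd[OF t] by simp
  qed
  obtain c where c: "\<And>t. t \<in> {a<..<b} \<Longrightarrow> d t = c"
    using has_vector_derivative_zero_constant[OF conv d'] by blast
  have cd': "continuous_on {a..b} (\<lambda>t. d t - c)" by (intro continuous_intros cd)
  have z: "d t - c = 0" if "t \<in> {a..b}" for t
    by (rule zero_on_closed_interval[OF cd' _ ab that]) (use c in auto)
  show ?thesis
  proof
    fix t assume "t \<in> {a..b}"
    then have "d t = c" "d a = c" using z[of t] z[of a] ab by auto
    then show "d t = d a" by simp
  qed
qed

lemma delay_solution:
  fixes B :: "complex^'n::finite^'n" and u \<psi> w :: "real \<Rightarrow> complex^'n"
  assumes tau: "\<tau> > 0" and c\<psi>: "continuous_on UNIV \<psi>" and cw: "continuous_on UNIV w"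
    and cu: "continuous_on {-\<tau>..} u" and init: "\<forall>s\<in>{-\<tau>..0}. u s = \<psi> s"
    and de: "\<And>t. t > 0 \<Longrightarrow> (\<forall>m::nat. t \<noteq> real m * \<tau>) \<Longrightarrow>
              (u has_vector_derivative B *v u (t - \<tau>) + w t) (at t)"
  shows "\<forall>t\<ge>0. u t = Yf \<tau> B \<psi> w t"
proof -
  define d where "d = (\<lambda>t. u t - Yf \<tau> B \<psi> w t)"
  have cd: "continuous_on {real j * \<tau> .. (real j + 1) * \<tau>} d" for j :: nat
  proof -
    have "real j * \<tau> \<ge> 0" using tau by simp
    then have "{real j * \<tau> .. (real j + 1) * \<tau>} \<subseteq> {-\<tau>..}"
    proof -
      assume j0: "real j * \<tau> \<ge> 0"
      show ?thesis
      proof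
        fix x assume "x \<in> {real j * \<tau> .. (real j + 1) * \<tau>}"
        then have "real j * \<tau> \<le> x" by simp
        then have "-\<tau> \<le> x" using j0 tau by linarith
        then show "x \<in> {-\<tau>..}" by simp
      qed
    qed
    then have "continuous_on {real j * \<tau> .. (real j + 1) * \<tau>} u"
      by (rule continuous_on_subset[OF cu])
    moreover have "continuous_on {real j * \<tau> .. (real j + 1) * \<tau>} (Yf \<tau> B \<psi> w)"
      by (rule continuous_on_subset[OF Y_cont[OF tau c\<psi> cw, of "(real j + 1) * \<tau>"]]) (use tau in auto)
    ultimately show ?thesis unfolding d_def by (intro continuous_intros)
  qed
  have dd: "(d has_vector_derivative B *v (u (t - \<tau>) - (if t < \<tau> then \<psi> (t - \<tau>) else Yf \<tau> B \<psi> w (t - \<tau>)))) (at t)"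
    if t: "t > 0" "\<forall>m::nat. t \<noteq> real m * \<tau>" for t
  proof -
    have "(d has_vector_derivative (B *v u (t - \<tau>) + w t) -
            ((if t < \<tau> then B *v \<psi> (t - \<tau>) else 0) + w t + B *v Yf \<tau> B \<psi> w (t - \<tau>))) (at t)"
      unfolding d_def by (rule has_vector_derivative_diff[OF de[OF t] Y_deriv[OF tau c\<psi> cw t]])
    moreover have "(B *v u (t - \<tau>) + w t) -
            ((if t < \<tau> then B *v \<psi> (t - \<tau>) else 0) + w t + B *v Yf \<tau> B \<psi> w (t - \<tau>))
          = B *v (u (t - \<tau>) - (if t < \<tau> then \<psi> (t - \<tau>) else Yf \<tau> B \<psi> w (t - \<tau>)))"
    proof (cases "t < \<tau>")
      case True
      then have "Yf \<tau> B \<psi> w (t - \<tau>) = 0" by (intro Y_neg[OF tau]) simp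
      then show ?thesis using True by (simp add: matrix_vector_mult_diff_distrib)
    next
      case False
      then show ?thesis by (simp add: matrix_vector_mult_diff_distrib)
    qed
    ultimately show ?thesis by simp
  qed
  have C: "\<forall>t\<in>{real j * \<tau> .. (real j + 1) * \<tau>}. d t = 0" for j :: nat
  proof (induction j)
    case 0
    have "\<forall>t\<in>{0..\<tau>}. d t = d 0"
    proof (rule const_interval)
      show "continuous_on {0..\<tau>} d" using cd[of 0] by simp
      show "0 < \<tau>" by (rule tau)
      fix t assume t: "t \<in> {0<..<\<tau>}"
      then have nm: "\<forall>m::nat. t \<noteq> real m * \<tau>" using open_interval_nonmult[OF tau, of 0 t] by auto
      have "u (t - \<tau>) = \<psi> (t - \<tau>)" using init t by auto
      then show "(d has_vector_derivative 0) (at t)" using dd[of t] nm t by auto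
    qed
    moreover have "d 0 = 0"
    proof -
      have "u 0 = \<psi> 0" using init tau by simp
      then show ?thesis using Y_zero[OF tau, of B \<psi> w] by (simp add: d_def)
    qed
    ultimately show ?case by simp
  next
    case (Suc j)
    let ?a = "(real j + 1) * \<tau>" and ?b = "(real j + 2) * \<tau>"
    have "\<forall>t\<in>{?a..?b}. d t = d ?a"
    proof (rule const_interval)
      show "continuous_on {?a..?b} d" using cd[of "Suc j"] by (simp add: algebra_simps)
      show "?a < ?b" using tau by simp
      fix t assume t: "t \<in> {?a<..<?b}"
      then have nm: "\<forall>m::nat. t \<noteq> real m * \<tau>"
        using open_interval_nonmult[OF tau, of "Suc j" t] by (simp add: algebra_simps)
      have j0: "real j * \<tau> \<ge> 0" using tau by simp
      have ta: "?a < t" "t < ?b" using t by auto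
      have "?a = real j * \<tau> + \<tau>" by (simp add: algebra_simps)
      then have t\<tau>: "\<tau> < t" using ta j0 by linarith
      have tm: "t - \<tau> \<in> {real j * \<tau> .. (real j + 1) * \<tau>}" using ta by (simp add: algebra_simps)
      have "d (t - \<tau>) = 0" using Suc.IH tm by blast
      then have z: "u (t - \<tau>) - Yf \<tau> B \<psi> w (t - \<tau>) = 0" by (simp add: d_def)
      have "(d has_vector_derivative B *v (u (t - \<tau>) - Yf \<tau> B \<psi> w (t - \<tau>))) (at t)"
        using dd[of t] nm t\<tau> tau by simp
      then show "(d has_vector_derivative 0) (at t)" unfolding z by simp
    qed
    moreover have "d ?a = 0" using Suc.IH tau by auto
    ultimately have "\<forall>t\<in>{?a..?b}. d t = 0" by simp
    then show ?case by (simp add: algebra_simps)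
  qed
  show ?thesis
  proof (intro allI impI)
    fix t :: real assume t: "t \<ge> 0"
    obtain j :: nat where "real j * \<tau> \<le> t" "t < (real j + 1) * \<tau>" using floor_interval[OF tau t] by blast
    then have "d t = 0" using C[of j] by auto
    then show "u t = Yf \<tau> B \<psi> w t" by (simp add: d_def)
  qed
qed


(* ---- p1/P9.thy ---- *)


lemma Y_integrable:
  fixes B :: "complex^'n::finite^'n" and \<psi> w :: "real \<Rightarrow> complex^'n"
  assumes tau: "\<tau> > 0" and c\<psi>: "continuous_on UNIV \<psi>" and cw: "continuous_on UNIV w"
  shows "(\<lambda>s. (delay_exp \<tau> B (t - 2 * \<tau> - s) ** B) *v \<psi> s) integrable_on {-\<tau>..0}"
    and "(\<lambda>s. delay_exp \<tau> B (t - \<tau> - s) *v w s) integrable_on {0..t}"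
proof -
  obtain M :: nat where tM: "t \<le> real M * \<tau>" using exists_M[OF tau] by blast
  let ?D = "delay_exp \<tau> B"
  have cb: "continuous_on S (\<lambda>s. B *v \<psi> s)" for S
    by (rule bounded_linear.continuous_on[OF matrix_vector_mul_bounded_linear continuous_on_subset[OF c\<psi>]]) auto
  have cw': "continuous_on S w" for S using cw by (rule continuous_on_subset) auto
  have "(\<lambda>s. \<Sum>j\<le>M. mpow B j *v (pp j ((t - (real j + 1) * \<tau>) - s) *\<^sub>R (B *v \<psi> s))) integrable_on {-\<tau>..0}"
    by (rule integrable_sum) (auto intro!: int_mv(2) Phi_restrict(1)[OF cb])
  then show "(\<lambda>s. (?D (t - 2 * \<tau> - s) ** B) *v \<psi> s) integrable_on {-\<tau>..0}"
  proof (rule integrable_eq)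
    fix s assume s: "s \<in> {-\<tau>..0}"
    have "?D (t - 2 * \<tau> - s) = (\<Sum>j\<le>M. pp j (t - 2 * \<tau> - s - (real j - 1) * \<tau>) *\<^sub>R mpow B j)"
      by (rule delay_expand[OF tau]) (use tM tau s in auto)
    then show "(\<Sum>j\<le>M. mpow B j *v (pp j ((t - (real j + 1) * \<tau>) - s) *\<^sub>R (B *v \<psi> s))) = (?D (t - 2 * \<tau> - s) ** B) *v \<psi> s"
      by (simp add: sum_mv_left smul_mv mv_scaleR_comm matrix_vector_mul_assoc[symmetric] algebra_simps)
  qed
  have "(\<lambda>s. \<Sum>j\<le>M. mpow B j *v (pp j ((t - real j * \<tau>) - s) *\<^sub>R w s)) integrable_on {0..t}"
    by (rule integrable_sum) (auto intro!: int_mv(2) Phi_restrict(1)[OF cw'])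
  then show "(\<lambda>s. ?D (t - \<tau> - s) *v w s) integrable_on {0..t}"
  proof (rule integrable_eq)
    fix s assume s: "s \<in> {0..t}"
    have "?D (t - \<tau> - s) = (\<Sum>j\<le>M. pp j (t - \<tau> - s - (real j - 1) * \<tau>) *\<^sub>R mpow B j)"
      by (rule delay_expand[OF tau]) (use tM tau s in auto)
    then show "(\<Sum>j\<le>M. mpow B j *v (pp j ((t - real j * \<tau>) - s) *\<^sub>R w s)) = ?D (t - \<tau> - s) *v w s"
      by (simp add: sum_mv_left smul_mv mv_scaleR_comm algebra_simps)
  qed
qed

lemma mm_add_rdistrib: "((A::complex^'n^'n) + B) ** M = A ** M + B ** M"
  by (simp add: vec_eq_iff matrix_matrix_mult_def sum.distrib distrib_right)

lemma sum_mm_left: fixes P :: "'i \<Rightarrow> complex^'n^'n" shows "(\<Sum>j\<in>S. P j) ** (M::complex^'n^'n) = (\<Sum>j\<in>S. P j ** M)"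
proof (induction S rule: infinite_finite_induct)
  case (insert x F) then show ?case by (simp add: mm_add_rdistrib)
qed auto

lemma sum_mm_right: fixes P :: "'i \<Rightarrow> complex^'n^'n" shows "(M::complex^'n^'n) ** (\<Sum>j\<in>S. P j) = (\<Sum>j\<in>S. M ** P j)"
proof (induction S rule: infinite_finite_induct)
  case (insert x F) then show ?case by (simp add: matrix_add_ldistrib)
qed auto

lemma D_comm:
  fixes B M :: "complex^'n::finite^'n"
  assumes c: "B ** M = M ** B"
  shows "delay_exp \<tau> B r ** M = M ** delay_exp \<tau> B r"
proof -
  have cj: "mpow B j ** M = M ** mpow B j" for j by (rule mpow_comm[OF c])
  show ?thesis
    unfolding delay_exp_def
    by (simp add: sum_mm_left sum_mm_right smul_mm1 smul_mm2 cj)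
qed


lemma x1_formula:
  fixes J A1 B1 :: "complex^'a::finite^'a" and y h \<phi> :: "real \<Rightarrow> complex^'a" and \<tau> :: real
  assumes tau: "\<tau> > 0" and invJ: "invertible J"
    and cJA: "J ** A1 = A1 ** J" and cJB: "J ** B1 = B1 ** J" and cAB: "A1 ** B1 = B1 ** A1"
    and cont: "continuous_on {-\<tau>..} y"
    and init: "\<forall>t\<in>{-\<tau>..0}. y t = \<phi> t"
    and s\<phi>: "smooth_fun \<phi>"
    and de: "\<And>t. t \<ge> 0 \<Longrightarrow> (\<forall>j::nat. t \<noteq> real j * \<tau>) \<Longrightarrow>
       ((\<lambda>s. J *v y s) has_vector_derivative (A1 *v y t + B1 *v y (t - \<tau>) + h t)) (at t)"
    and sh: "smooth_fun h"
  defines "At \<equiv> matrix_inv J ** A1"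
    and "Bh \<equiv> mexp ((- \<tau>) *\<^sub>R (matrix_inv J ** A1)) ** (matrix_inv J ** B1)"
    and "g \<equiv> \<lambda>s. matrix_inv J *v h s"
  shows "\<forall>t\<ge>0. y t = (mexp (t *\<^sub>R At) ** delay_exp \<tau> Bh (t - \<tau>)) *v \<phi> 0
        + integral {-\<tau>..0} (\<lambda>s. (mexp ((t - s) *\<^sub>R At) ** delay_exp \<tau> Bh (t - 2 * \<tau> - s) ** Bh) *v \<phi> s)
        + integral {0..t} (\<lambda>s. (mexp ((t - s) *\<^sub>R At) ** delay_exp \<tau> Bh (t - \<tau> - s)) *v g s)"
proof -
  define Ji where "Ji = matrix_inv J"
  have JiJ: "Ji ** J = mat 1" "J ** Ji = mat 1" using minv[OF invJ] by (auto simp: Ji_def)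
  have JiJv: "Ji *v (J *v v) = v" for v using JiJ by (simp add: matrix_vector_mul_assoc)
  have cJiA: "Ji ** A1 = A1 ** Ji" using minv_comm[OF invJ cJA] by (simp add: Ji_def)
  have cJiB: "Ji ** B1 = B1 ** Ji" using minv_comm[OF invJ cJB] by (simp add: Ji_def)
  define Bt where "Bt = Ji ** B1"
  have AtJi: "At = Ji ** A1" by (simp add: At_def Ji_def)
  have cAtBt: "At ** Bt = Bt ** At"
  proof -
    have "At ** Bt = Ji ** (A1 ** Ji) ** B1" by (simp add: AtJi Bt_def matrix_mul_assoc)
    also have "\<dots> = Ji ** Ji ** (A1 ** B1)" using cJiA by (metis matrix_mul_assoc)
    also have "\<dots> = Ji ** Ji ** (B1 ** A1)" using cAB by simp
    also have "\<dots> = Ji ** (Ji ** B1) ** A1" by (metis matrix_mul_assoc)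
    also have "\<dots> = Ji ** (B1 ** Ji) ** A1" using cJiB by simp
    also have "\<dots> = Bt ** At" by (simp add: AtJi Bt_def matrix_mul_assoc)
    finally show ?thesis .
  qed
  define E where "E = (\<lambda>r. mexp (r *\<^sub>R At))"
  have Bh_def': "Bh = E (-\<tau>) ** Bt" by (simp add: Bh_def E_def At_def Bt_def Ji_def)
  have EAt: "E r ** At = At ** E r" for r unfolding E_def by (rule mexp_comm) simp
  have EBt: "E r ** Bt = Bt ** E r" for r unfolding E_def by (rule mexp_comm[OF cAtBt])
  have Eadd: "E r ** E s = E (r + s)" for r s unfolding E_def by (rule mexp_add)
  have E0: "E 0 = mat 1" unfolding E_def using mexp_0 by simp
  have cBhAt: "Bh ** At = At ** Bh"
    unfolding Bh_def' by (metis EAt cAtBt matrix_mul_assoc)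
  have EBh: "E r ** Bh = Bh ** E r" for r unfolding E_def by (rule mexp_comm[OF cBhAt[symmetric]])
  have ED: "E r ** delay_exp \<tau> Bh q = delay_exp \<tau> Bh q ** E r" for r q
    using D_comm[OF EBh[symmetric]] by simp
  have Ed: "((\<lambda>r. E r) has_vector_derivative E r ** At) (at r)" for r
    unfolding E_def by (rule mexp_deriv)
  have Ecd: "continuous_on S (\<lambda>r. E (- r))" for S
  proof (rule continuous_at_imp_continuous_on, rule ballI)
    fix r
    have "((\<lambda>r. E r) \<circ> uminus has_vector_derivative (-1) *\<^sub>R (E (- r) ** At)) (at r)"
      by (rule vector_diff_chain_at) (auto intro!: derivative_eq_intros Ed)
    then show "isCont (\<lambda>r. E (- r)) r"
      by (metis (no_types, lifting) comp_apply ext has_vector_derivative_continuous)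
  qed
  define g' where "g' = (\<lambda>s. Ji *v h s)"
  have gg: "g = g'" by (simp add: g_def g'_def Ji_def)
  define \<psi> where "\<psi> = (\<lambda>s. E (- s) *v \<phi> s)"
  define w where "w = (\<lambda>s. E (- s) *v g' s)"
  define u where "u = (\<lambda>s. E (- s) *v y s)"
  have c\<psi>: "continuous_on UNIV \<psi>" unfolding \<psi>_def
    by (rule bounded_bilinear.continuous_on[OF bounded_bilinear_mv Ecd smooth_cont[OF s\<phi>]])
  have cw: "continuous_on UNIV w" unfolding w_def g'_def
    by (rule bounded_bilinear.continuous_on[OF bounded_bilinear_mv Ecd smooth_cont[OF smooth_mv[OF sh]]])
  have cu: "continuous_on {-\<tau>..} u" unfolding u_def
    by (rule bounded_bilinear.continuous_on[OF bounded_bilinear_mv Ecd cont])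
  have uinit: "\<forall>s\<in>{-\<tau>..0}. u s = \<psi> s" using init by (simp add: u_def \<psi>_def)
  have ude: "(u has_vector_derivative Bh *v u (t - \<tau>) + w t) (at t)"
    if t: "t > 0" "\<forall>m::nat. t \<noteq> real m * \<tau>" for t
  proof -
    have dJ: "((\<lambda>s. Ji *v (J *v y s)) has_vector_derivative Ji *v (A1 *v y t + B1 *v y (t - \<tau>) + h t)) (at t)"
      by (rule bounded_linear.has_vector_derivative[OF matrix_vector_mul_bounded_linear de]) (use t in auto)
    have dy: "(y has_vector_derivative At *v y t + Bt *v y (t - \<tau>) + g' t) (at t)"
      using dJ by (simp add: JiJv JiJ AtJi Bt_def g'_def matrix_vector_right_distrib matrix_vector_mul_assoc)
    have dE: "((\<lambda>s. E (- s)) has_vector_derivative - (E (- t) ** At)) (at t)"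
    proof -
      have "((\<lambda>r. E r) \<circ> uminus has_vector_derivative (-1) *\<^sub>R (E (- t) ** At)) (at t)"
        by (rule vector_diff_chain_at) (auto intro!: derivative_eq_intros Ed)
      then show ?thesis by (simp add: o_def)
    qed
    have "(u has_vector_derivative E (- t) *v (At *v y t + Bt *v y (t - \<tau>) + g' t) + (- (E (- t) ** At)) *v y t) (at t)"
      unfolding u_def by (rule bounded_bilinear.has_vector_derivative[OF bounded_bilinear_mv dE dy])
    moreover have "E (- t) *v (At *v y t + Bt *v y (t - \<tau>) + g' t) + (- (E (- t) ** At)) *v y t
        = Bh *v u (t - \<tau>) + w t"
    proof -
      have "E (- t) *v (Bt *v y (t - \<tau>)) = Bh *v u (t - \<tau>)"
      proof -
        have "E (- t) ** Bt = E (- \<tau>) ** E (- (t - \<tau>)) ** Bt" by (simp add: Eadd)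
        also have "\<dots> = E (- \<tau>) ** Bt ** E (- (t - \<tau>))" by (metis EBt matrix_mul_assoc)
        finally show ?thesis by (simp add: u_def Bh_def' matrix_vector_mul_assoc)
      qed
      moreover have "(- (E (- t) ** At)) *v y t = - (E (- t) *v (At *v y t))"
      proof -
        have "(- M) *v v = - (M *v v)" for M :: "complex^'a^'a" and v
          by (simp add: vec_eq_iff matrix_vector_mult_def sum_negf)
        then show ?thesis by (simp add: matrix_vector_mul_assoc)
      qed
      ultimately show ?thesis by (simp add: w_def matrix_vector_right_distrib)
    qed
    ultimately show ?thesis by simp
  qed
  have sol: "\<forall>t\<ge>0. u t = Yf \<tau> Bh \<psi> w t"
    by (rule delay_solution[OF tau c\<psi> cw cu uinit ude])
  show ?thesis
  proof (intro allI impI)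
    fix t :: real assume t: "t \<ge> 0"
    let ?D = "delay_exp \<tau> Bh"
    have yt: "y t = E t *v u t" by (simp add: u_def matrix_vector_mul_assoc Eadd E0)
    have i2: "(\<lambda>s. (?D (t - 2 * \<tau> - s) ** Bh) *v \<psi> s) integrable_on {-\<tau>..0}"
      by (rule Y_integrable(1)[OF tau c\<psi> cw])
    have i3: "(\<lambda>s. ?D (t - \<tau> - s) *v w s) integrable_on {0..t}"
      by (rule Y_integrable(2)[OF tau c\<psi> cw])
    have p2: "(mexp ((t - s) *\<^sub>R At) ** ?D (t - 2 * \<tau> - s) ** Bh) *v \<phi> s = E t *v ((?D (t - 2 * \<tau> - s) ** Bh) *v \<psi> s)" for s
    proof -
      have "mexp ((t - s) *\<^sub>R At) = E t ** E (- s)" by (simp add: Eadd) (simp add: E_def)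
      moreover have "E (- s) ** ?D (t - 2 * \<tau> - s) ** Bh = ?D (t - 2 * \<tau> - s) ** Bh ** E (- s)"
        by (metis ED EBh matrix_mul_assoc)
      ultimately have "mexp ((t - s) *\<^sub>R At) ** ?D (t - 2 * \<tau> - s) ** Bh = E t ** (?D (t - 2 * \<tau> - s) ** Bh ** E (- s))"
        by (metis matrix_mul_assoc)
      then show ?thesis by (simp add: \<psi>_def matrix_vector_mul_assoc)
    qed
    have p3: "(mexp ((t - s) *\<^sub>R At) ** ?D (t - \<tau> - s)) *v g s = E t *v (?D (t - \<tau> - s) *v w s)" for s
    proof -
      have "mexp ((t - s) *\<^sub>R At) = E t ** E (- s)" by (simp add: Eadd) (simp add: E_def)
      moreover have "E (- s) ** ?D (t - \<tau> - s) = ?D (t - \<tau> - s) ** E (- s)" by (rule ED)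
      ultimately have "mexp ((t - s) *\<^sub>R At) ** ?D (t - \<tau> - s) = E t ** (?D (t - \<tau> - s) ** E (- s))"
        by (metis matrix_mul_assoc)
      then show ?thesis by (simp add: w_def gg matrix_vector_mul_assoc)
    qed
    have "y t = E t *v Yf \<tau> Bh \<psi> w t" using yt sol t by simp
    also have "\<dots> = (E t ** ?D (t - \<tau>)) *v \<phi> 0
        + E t *v integral {-\<tau>..0} (\<lambda>s. (?D (t - 2 * \<tau> - s) ** Bh) *v \<psi> s)
        + E t *v integral {0..t} (\<lambda>s. ?D (t - \<tau> - s) *v w s)"
      by (simp add: Yf_def \<psi>_def E0 matrix_vector_right_distrib matrix_vector_mul_assoc)
    also have "E t *v integral {-\<tau>..0} (\<lambda>s. (?D (t - 2 * \<tau> - s) ** Bh) *v \<psi> s)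
        = integral {-\<tau>..0} (\<lambda>s. (mexp ((t - s) *\<^sub>R At) ** ?D (t - 2 * \<tau> - s) ** Bh) *v \<phi> s)"
      unfolding p2 by (rule int_mv(1)[OF i2, symmetric])
    also have "E t *v integral {0..t} (\<lambda>s. ?D (t - \<tau> - s) *v w s)
        = integral {0..t} (\<lambda>s. (mexp ((t - s) *\<^sub>R At) ** ?D (t - \<tau> - s)) *v g s)"
      unfolding p3 by (rule int_mv(1)[OF i3, symmetric])
    finally show "y t = (mexp (t *\<^sub>R At) ** ?D (t - \<tau>)) *v \<phi> 0
        + integral {-\<tau>..0} (\<lambda>s. (mexp ((t - s) *\<^sub>R At) ** ?D (t - 2 * \<tau> - s) ** Bh) *v \<phi> s)
        + integral {0..t} (\<lambda>s. (mexp ((t - s) *\<^sub>R At) ** ?D (t - \<tau> - s)) *v g s)"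
      by (simp add: E_def)
  qed
qed


(* ---- P10.thy ---- *)


declare nderiv.simps(2)[simp del]

lemma sum_UNIV_plus: "sum g (UNIV :: ('a::finite + 'b::finite) set) = (\<Sum>a\<in>UNIV. g (Inl a)) + (\<Sum>b\<in>UNIV. g (Inr b))"
  using sum.Plus[of "UNIV::'a set" "UNIV::'b set" g] by (simp add: o_def)

lemma blk1_mv: "blk1 (blkdiag3 M1 M2 M3 *v v) = M1 *v blk1 (v::'r::comm_semiring_1^('a::finite+'b::finite+'c::finite))"
  by (simp add: vec_eq_iff blk1_def blkdiag3_def matrix_vector_mult_def sum_UNIV_plus)
lemma blk2_mv: "blk2 (blkdiag3 M1 M2 M3 *v v) = M2 *v blk2 (v::'r::comm_semiring_1^('a::finite+'b::finite+'c::finite))"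
  by (simp add: vec_eq_iff blk2_def blkdiag3_def matrix_vector_mult_def sum_UNIV_plus)
lemma blk3_mv: "blk3 (blkdiag3 M1 M2 M3 *v v) = M3 *v blk3 (v::'r::comm_semiring_1^('a::finite+'b::finite+'c::finite))"
  by (simp add: vec_eq_iff blk3_def blkdiag3_def matrix_vector_mult_def sum_UNIV_plus)

lemma blkdiag3_mult:
  fixes M1 N1 :: "'r::comm_semiring_1^'a::finite^'a" and M2 N2 :: "'r^'b::finite^'b" and M3 N3 :: "'r^'c::finite^'c"
  shows "blkdiag3 M1 M2 M3 ** blkdiag3 N1 N2 N3 = blkdiag3 (M1 ** N1) (M2 ** N2) (M3 ** N3)"
  by (simp add: vec_eq_iff blkdiag3_def matrix_matrix_mult_def sum_UNIV_plus split: sum.splits)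

lemma blkdiag3_inj:
  fixes M1 N1 :: "'r::comm_semiring_1^'a::finite^'a" and M2 N2 :: "'r^'b::finite^'b" and M3 N3 :: "'r^'c::finite^'c"
  assumes "blkdiag3 M1 M2 M3 = blkdiag3 N1 N2 N3"
  shows "M1 = N1" "M2 = N2" "M3 = N3"
proof -
  have e: "blkdiag3 M1 M2 M3 $ i $ j = blkdiag3 N1 N2 N3 $ i $ j" for i j using assms by simp
  show "M1 = N1" using e[of "Inl _" "Inl _"] by (simp add: vec_eq_iff blkdiag3_def)
  show "M2 = N2" using e[of "Inr (Inl _)" "Inr (Inl _)"] by (simp add: vec_eq_iff blkdiag3_def)
  show "M3 = N3" using e[of "Inr (Inr _)" "Inr (Inr _)"] by (simp add: vec_eq_iff blkdiag3_def)
qed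

lemma blk1_add: "blk1 (u + v) = blk1 u + blk1 v" by (simp add: vec_eq_iff blk1_def)
lemma blk2_add: "blk2 (u + v) = blk2 u + blk2 v" by (simp add: vec_eq_iff blk2_def)
lemma blk3_add: "blk3 (u + v) = blk3 u + blk3 v" by (simp add: vec_eq_iff blk3_def)

lemma bl_blk1: "bounded_linear (blk1 :: 'r::real_normed_vector^('a::finite+'b::finite+'c::finite) \<Rightarrow> _)"
proof (rule bounded_linear_intro[where K=1])
  show "blk1 (x + y) = blk1 x + blk1 y" for x y :: "'r^('a+'b+'c)" by (simp add: vec_eq_iff blk1_def)
  show "blk1 (r *\<^sub>R x) = r *\<^sub>R blk1 x" for r and x :: "'r^('a+'b+'c)" by (simp add: vec_eq_iff blk1_def)
  show "norm (blk1 x) \<le> norm x * 1" for x :: "'r^('a+'b+'c)"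
  proof -
    have "norm (blk1 x) = L2_set (\<lambda>i. norm (x $ Inl i)) UNIV" by (simp add: norm_vec_def blk1_def)
    also have "\<dots> = L2_set (\<lambda>i. norm (x $ i)) (Inl ` UNIV)" by (simp add: L2_set_def sum.reindex)
    also have "\<dots> \<le> L2_set (\<lambda>i. norm (x $ i)) UNIV" unfolding L2_set_def by (intro real_sqrt_le_mono sum_mono2) auto
    finally show ?thesis by (simp add: norm_vec_def)
  qed
qed

lemma bl_blk2: "bounded_linear (blk2 :: 'r::real_normed_vector^('a::finite+'b::finite+'c::finite) \<Rightarrow> _)"
proof (rule bounded_linear_intro[where K=1])
  show "blk2 (x + y) = blk2 x + blk2 y" for x y :: "'r^('a+'b+'c)" by (simp add: vec_eq_iff blk2_def)
  show "blk2 (r *\<^sub>R x) = r *\<^sub>R blk2 x" for r and x :: "'r^('a+'b+'c)" by (simp add: vec_eq_iff blk2_def)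
  show "norm (blk2 x) \<le> norm x * 1" for x :: "'r^('a+'b+'c)"
  proof -
    have "norm (blk2 x) = L2_set (\<lambda>i. norm (x $ Inr (Inl i))) UNIV" by (simp add: norm_vec_def blk2_def)
    also have "\<dots> = L2_set (\<lambda>i. norm (x $ i)) ((\<lambda>i. Inr (Inl i)) ` UNIV)" by (simp add: L2_set_def sum.reindex inj_on_def)
    also have "\<dots> \<le> L2_set (\<lambda>i. norm (x $ i)) UNIV" unfolding L2_set_def by (intro real_sqrt_le_mono sum_mono2) auto
    finally show ?thesis by (simp add: norm_vec_def)
  qed
qed

lemma bl_blk3: "bounded_linear (blk3 :: 'r::real_normed_vector^('a::finite+'b::finite+'c::finite) \<Rightarrow> _)"
proof (rule bounded_linear_intro[where K=1])
  show "blk3 (x + y) = blk3 x + blk3 y" for x y :: "'r^('a+'b+'c)" by (simp add: vec_eq_iff blk3_def)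
  show "blk3 (r *\<^sub>R x) = r *\<^sub>R blk3 x" for r and x :: "'r^('a+'b+'c)" by (simp add: vec_eq_iff blk3_def)
  show "norm (blk3 x) \<le> norm x * 1" for x :: "'r^('a+'b+'c)"
  proof -
    have "norm (blk3 x) = L2_set (\<lambda>i. norm (x $ Inr (Inr i))) UNIV" by (simp add: norm_vec_def blk3_def)
    also have "\<dots> = L2_set (\<lambda>i. norm (x $ i)) ((\<lambda>i. Inr (Inr i)) ` UNIV)" by (simp add: L2_set_def sum.reindex inj_on_def)
    also have "\<dots> \<le> L2_set (\<lambda>i. norm (x $ i)) UNIV" unfolding L2_set_def by (intro real_sqrt_le_mono sum_mono2) auto
    finally show ?thesis by (simp add: norm_vec_def)
  qed
qed


theorem theorem6:
  fixes \<tau> :: real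
    and JE A1 B1 :: "complex^'a^'a"
    and NE2 JA B2 :: "complex^'b^'b"
    and NE3 NA3 JB :: "complex^'c^'c"
    and E A B :: "complex^('a+'b+'c)^('a+'b+'c)"
    and f \<phi> x :: "real \<Rightarrow> complex^('a+'b+'c)"
  assumes tau: "\<tau> > 0"
    and E_def: "E = blkdiag3 JE NE2 NE3"
    and A_def: "A = blkdiag3 A1 JA NA3"
    and B_def: "B = blkdiag3 B1 B2 JB"
    and comm: "E ** A = A ** E" "E ** B = B ** E" "A ** B = B ** A"
    and reg: "regular_triple E A B"
    and inv: "invertible JE" "invertible JA" "invertible JB"
    and nil: "nilpotent_mat NE2" "nilpotent_mat NE3" "nilpotent_mat NA3"
    and uniq: "uniquely_solvable E A B \<tau> f \<phi>"
    and smooth: "smooth_fun f" "smooth_fun \<phi>"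
    and sol: "ddae_solution E A B \<tau> f \<phi> x"
  defines "At1 \<equiv> matrix_inv JE ** A1"
    and "Bt1 \<equiv> matrix_inv JE ** B1"
    and "ft1 \<equiv> (\<lambda>s. matrix_inv JE *v blk1 (f s))"
    and "Bh1 \<equiv> mexp ((- \<tau>) *\<^sub>R (matrix_inv JE ** A1)) ** (matrix_inv JE ** B1)"
    and "NEt2 \<equiv> matrix_inv JA ** NE2"
    and "Bt2 \<equiv> matrix_inv JA ** B2"
    and "ft2 \<equiv> (\<lambda>s. matrix_inv JA *v blk2 (f s))"
    and "NEt3 \<equiv> matrix_inv JB ** NE3"
    and "NAt3 \<equiv> matrix_inv JB ** NA3"
    and "ft3 \<equiv> (\<lambda>s. matrix_inv JB *v blk3 (f s))"
    and "\<zeta> \<equiv> nilpotency_index (matrix_inv JA ** NE2)"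
    and "L3 \<equiv> (\<lambda>g::real \<Rightarrow> complex^'c. \<lambda>s. (matrix_inv JB ** NE3) *v vector_derivative g (at s) - (matrix_inv JB ** NA3) *v g s)"
  shows "\<forall>t\<ge>0.
      blk1 (x t) =
        (mexp (t *\<^sub>R At1) ** delay_exp \<tau> Bh1 (t - \<tau>)) *v blk1 (\<phi> 0)
        + integral {-\<tau>..0} (\<lambda>s. (mexp ((t - s) *\<^sub>R At1) ** delay_exp \<tau> Bh1 (t - 2 * \<tau> - s) ** Bh1)
                                      *v blk1 (\<phi> s))
        + integral {0..t} (\<lambda>s. (mexp ((t - s) *\<^sub>R At1) ** delay_exp \<tau> Bh1 (t - \<tau> - s)) *v ft1 s)
    \<and> blk2 (x t) =
        - (\<Sum>i<\<zeta>. mpow NEt2 i *v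
              (Bt2 *v rderiv i (\<lambda>s. blk2 (x s)) (t - \<tau>) + nderiv i ft2 t))
    \<and> blk3 (x t) =
        - (\<Sum>i<CARD('c). (L3 ^^ i) ft3 (t + (real i + 1) * \<tau>))"
proof -
  \<comment> \<open>commutation of blocks\<close>
  have c1: "blkdiag3 (JE ** A1) (NE2 ** JA) (NE3 ** NA3) = blkdiag3 (A1 ** JE) (JA ** NE2) (NA3 ** NE3)"
    using comm(1) by (simp add: E_def A_def blkdiag3_mult)
  have c2: "blkdiag3 (JE ** B1) (NE2 ** B2) (NE3 ** JB) = blkdiag3 (B1 ** JE) (B2 ** NE2) (JB ** NE3)"
    using comm(2) by (simp add: E_def B_def blkdiag3_mult)
  have c3: "blkdiag3 (A1 ** B1) (JA ** B2) (NA3 ** JB) = blkdiag3 (B1 ** A1) (B2 ** JA) (JB ** NA3)"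
    using comm(3) by (simp add: A_def B_def blkdiag3_mult)
  note cc1 = blkdiag3_inj[OF c1] and cc2 = blkdiag3_inj[OF c2] and cc3 = blkdiag3_inj[OF c3]
  \<comment> \<open>solution properties\<close>
  have xcont: "continuous_on {-\<tau>..} x" and xinit: "\<forall>t\<in>{-\<tau>..0}. x t = \<phi> t"
    and xde: "\<And>t. t \<ge> 0 \<Longrightarrow> (\<forall>j::nat. t \<noteq> real j * \<tau>) \<Longrightarrow>
        ((\<lambda>s. E *v x s) has_vector_derivative (A *v x t + B *v x (t - \<tau>) + f t)) (at t)"
    using sol unfolding ddae_solution_def by auto
  \<comment> \<open>block 1\<close>
  have de1: "((\<lambda>s. JE *v blk1 (x s)) has_vector_derivative
      (A1 *v blk1 (x t) + B1 *v blk1 (x (t - \<tau>)) + blk1 (f t))) (at t)"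
    if "t \<ge> 0" "\<forall>j::nat. t \<noteq> real j * \<tau>" for t
    using bounded_linear.has_vector_derivative[OF bl_blk1 xde[OF that]]
    by (simp add: E_def A_def B_def blk1_mv blk1_add)
  have de2: "((\<lambda>s. NE2 *v blk2 (x s)) has_vector_derivative
      (JA *v blk2 (x t) + B2 *v blk2 (x (t - \<tau>)) + blk2 (f t))) (at t)"
    if "t \<ge> 0" "\<forall>j::nat. t \<noteq> real j * \<tau>" for t
    using bounded_linear.has_vector_derivative[OF bl_blk2 xde[OF that]]
    by (simp add: E_def A_def B_def blk2_mv blk2_add)
  have de3: "((\<lambda>s. NE3 *v blk3 (x s)) has_vector_derivative
      (NA3 *v blk3 (x t) + JB *v blk3 (x (t - \<tau>)) + blk3 (f t))) (at t)"
    if "t \<ge> 0" "\<forall>j::nat. t \<noteq> real j * \<tau>" for t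
    using bounded_linear.has_vector_derivative[OF bl_blk3 xde[OF that]]
    by (simp add: E_def A_def B_def blk3_mv blk3_add)
  have cont1: "continuous_on {-\<tau>..} (\<lambda>s. blk1 (x s))" by (rule bounded_linear.continuous_on[OF bl_blk1 xcont])
  have cont2: "continuous_on {-\<tau>..} (\<lambda>s. blk2 (x s))" by (rule bounded_linear.continuous_on[OF bl_blk2 xcont])
  have cont3: "continuous_on {-\<tau>..} (\<lambda>s. blk3 (x s))" by (rule bounded_linear.continuous_on[OF bl_blk3 xcont])
  have init1: "\<forall>t\<in>{-\<tau>..0}. blk1 (x t) = blk1 (\<phi> t)" using xinit by simp
  have init2: "\<forall>t\<in>{-\<tau>..0}. blk2 (x t) = blk2 (\<phi> t)" using xinit by simp
  have sf1: "smooth_fun (\<lambda>s. blk1 (f s))" by (rule smooth_linear[OF bl_blk1 smooth(1)])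
  have sf2: "smooth_fun (\<lambda>s. blk2 (f s))" by (rule smooth_linear[OF bl_blk2 smooth(1)])
  have sf3: "smooth_fun (\<lambda>s. blk3 (f s))" by (rule smooth_linear[OF bl_blk3 smooth(1)])
  have sp1: "smooth_fun (\<lambda>s. blk1 (\<phi> s))" by (rule smooth_linear[OF bl_blk1 smooth(2)])
  have sp2: "smooth_fun (\<lambda>s. blk2 (\<phi> s))" by (rule smooth_linear[OF bl_blk2 smooth(2)])
  note X1 = x1_formula[OF tau inv(1) cc1(1) cc2(1) cc3(1) cont1 init1 sp1 de1 sf1]
  note X2 = x2_formula[OF tau inv(2) cc1(2)[symmetric] nil(1) cont2 init2 sp2 de2 sf2]
  note X3 = x3_formula[OF tau inv(3) cc2(3)[symmetric] cc3(3)[symmetric] cc1(3) nil(2) nil(3) cont3 de3 sf3]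
  show ?thesis
    unfolding At1_def Bh1_def ft1_def NEt2_def Bt2_def ft2_def \<zeta>_def L3_def ft3_def
  proof (intro allI impI conjI)
    fix t :: real assume t: "t \<ge> 0"
    show "blk1 (x t) = (mexp (t *\<^sub>R (matrix_inv JE ** A1)) ** delay_exp \<tau> (mexp ((- \<tau>) *\<^sub>R (matrix_inv JE ** A1)) ** (matrix_inv JE ** B1)) (t - \<tau>)) *v blk1 (\<phi> 0) +
      integral {- \<tau>..0} (\<lambda>s. (mexp ((t - s) *\<^sub>R (matrix_inv JE ** A1)) ** delay_exp \<tau> (mexp ((- \<tau>) *\<^sub>R (matrix_inv JE ** A1)) ** (matrix_inv JE ** B1)) (t - 2 * \<tau> - s) ** (mexp ((- \<tau>) *\<^sub>R (matrix_inv JE ** A1)) ** (matrix_inv JE ** B1))) *v blk1 (\<phi> s)) +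
      integral {0..t} (\<lambda>s. (mexp ((t - s) *\<^sub>R (matrix_inv JE ** A1)) ** delay_exp \<tau> (mexp ((- \<tau>) *\<^sub>R (matrix_inv JE ** A1)) ** (matrix_inv JE ** B1)) (t - \<tau> - s)) *v (matrix_inv JE *v blk1 (f s)))"
      using X1 t by blast
    show "blk2 (x t) = - (\<Sum>i<nilpotency_index (matrix_inv JA ** NE2). mpow (matrix_inv JA ** NE2) i *v ((matrix_inv JA ** B2) *v rderiv i (\<lambda>s. blk2 (x s)) (t - \<tau>) + nderiv i (\<lambda>s. matrix_inv JA *v blk2 (f s)) t))"
      using X2 t by blast
    show "blk3 (x t) = - (\<Sum>i<CARD('c). ((\<lambda>g s. (matrix_inv JB ** NE3) *v vector_derivative g (at s) - (matrix_inv JB ** NA3) *v g s) ^^ i) (\<lambda>s. matrix_inv JB *v blk3 (f s)) (t + (real i + 1) * \<tau>))"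
      using X3 t tau by auto
  qed

qed


end
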